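(* Fix parameters $\tau\in(0,1/100)$ and $M\ge2$, and let $\theta=2+\tau$. Let $G=(\mu,\mathcal{V},\mathcal{W},\mathcal{E},\mathcal{P},f,g)$ be a non-trivial GCD graph which is maximal, such that \[ \mathcal{R}(G)\subseteq\{p> C_6\} \quad\text{and}\quad \mathcal{R}^\flat(G)=\emptyset . \] Let $n\ge1$ and, for each prime $p$, let $a_{p,1},\dots,a_{p,n}$ be non-negative weights. Then there is a structured GCD subgraph $G'$ of $G$ with edge set $\mathcal{E}'$ such that: (a) $G'$ is non-trivial and maximal; (b) $\sum_{p\in v/w,\ p\in\mathcal{R}(G)} a_{p,i} \le C_8\, n\sum_{p\in\mathcal{R}(G)}\frac{a_{p,i}}{p}$ for all $i\in\{1,\dots,n\}$ and all $(v,w)\in\mathcal{E}'$; (c) $q(G')\geqslant q(G)/2$.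
   Context: For a prime $p$, $k\in\mathbb{Z}$ and $\rho\in\mathbb{Q}_{>0}$, write $\operatorname{e}_p(\rho)=k$ if $\rho=p^ka/q$ with $a,q\in\mathbb{N}$, $p\nmid aq$. Write $p\in\rho$ if $\rho=a/q$ with $\gcd(a,q)=1$ and $p\mid aq$. For real $t$, $t^+=\max\{t,0\}$, $t^-=\max\{-t,0\}$. Weighted bipartite graph: $(\mu,\mathcal{V},\mathcal{W},\mathcal{E})$ with $\mu:\mathbb{R}_{>0}\to\mathbb{R}_{>0}$, $\mathcal{V},\mathcal{W}$ finite sets of positive reals, $\mathcal{E}\subseteq\mathcal{V}\times\mathcal{W}$; $\mu(\mathcal{T})=\sum_{t\in\mathcal{T}}\mu(t)$, $\mu(\mathcal{E})=\sum_{(v,w)\in\mathcal{E}}\mu(v)\mu(w)$; edge density $\delta=\mu(\mathcal{E})/(\mu(\mathcal{V})\mu(\mathcal{W}))$ if $\mathcal{E}\neq\emptyset$, else $0$; $\mu^{(\theta)}=\delta^\theta\mu(\mathcal{V})\mu(\mathcal{W})$. A subgraph has $\mathcal{V}'\subseteq\mathcal{V}$, $\mathcal{W}'\subseteq\mathcal{W}$, $\mathcal{E}'\subseteq\mathcal{E}\cap(\mathcal{V}'\times\mathcal{W}')$, same $\mu$. "Maximal" means $\mu^{(\theta)}(G)\ge\mu^{(\theta)}(G')$ for every subgraph $G'$ (with $\theta=2+\tau$). GCD graph: a septuple $G=(\mu,\mathcal{V},\mathcal{W},\mathcal{E},\mathcal{P},f,g)$ where $(\mu,\mathcal{V},\mathcal{W},\mathcal{E})$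 is a weighted bipartite graph with $\mathcal{V},\mathcal{W}\subset\mathbb{Q}_{>0}$, $\mathcal{P}$ is a set of primes, $f,g:\mathcal{P}\to\mathbb{Z}$, and for all $p\in\mathcal{P}$ and all $(a/q,b/r)\in\mathcal{V}\times\mathcal{W}$ with $\gcd(a,q)=\gcd(b,r)=1$: $p^{f^+(p)}\mid a$, $p^{g^+(p)}\mid b$, $p^{f^-(p)}\mid q$, $p^{g^-(p)}\mid r$, and if $(a/q,b/r)\in\mathcal{E}$ then the exact power of $p$ dividing $\gcd(a,b)$ is $p^{\min\{f^+(p),g^+(p)\}}$ and that dividing $\gcd(q,r)$ is $p^{\min\{f^-(p),g^-(p)\}}$. $G$ is non-trivial if $\mathcal{E}\neq\emptyset$. Quality: $q(G)=\mu^{(\theta)}(G)\prod_{p\in\mathcal{P}}p^{|f(p)-g(p)|}$. A GCD subgraph $G'=(\mu,\mathcal{V}',\mathcal{W}',\mathcal{E}',\mathcal{P}',f',g')$ of $G$ has $\mathcal{V}'\subseteq\mathcal{V}$, $\mathcal{W}'\subseteq\mathcal{W}$, $\mathcal{E}'\subseteq\mathcal{E}$, $\mathcal{P}'\supseteq\mathcal{P}$, $f'|_{\mathcal{P}}=f$, $g'|_{\mathcal{P}}=g$. $\mathcal{V}_{p^k}=\{v\in\mathcal{V}:\operatorname{e}_p(v)=k\}$, similarly $\mathcal{W}_{p^\ell}$; $\mathcal{E}_{p^k,p^\ell}=\mathcal{E}\cap(\mathcal{V}_{p^k}\times\mathcal{W}_{p^\ell})$; for $p\notin\mathcal{P}$,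 $G_{p^k,p^\ell}=(\mu,\mathcal{V}_{p^k},\mathcal{W}_{p^\ell},\mathcal{E}_{p^k,p^\ell},\mathcal{P}\cup\{p\},f_{p^k},g_{p^\ell})$ where $f_{p^k},g_{p^\ell}$ extend $f,g$ by $f_{p^k}(p)=k$, $g_{p^\ell}(p)=\ell$. $\mathcal{R}(G)$ is the set of primes $p\notin\mathcal{P}$ for which there is $(a/q,b/r)\in\mathcal{E}$ with $\gcd(a,q)=\gcd(b,r)=1$ and $p\mid\gcd(a,b)\gcd(q,r)$. Constants: $C_1=10^4/\tau$, $C_2=10MC_1^3$, $C_4=10^{10}M^2C_2^2$, $C_6=\max\{C_4,10^4MC_2,C_2^{10/\tau}\}$, $C_8=100MC_2$. $\mathcal{R}^\sharp(G)$ is the set of $p\in\mathcal{R}(G)$ such that (i) there is $k\in\mathbb{Z}$ with $\mu(\mathcal{V}_{p^k})\ge(1-C_2/p)\mu(\mathcal{V})$ and $\mu(\mathcal{W}_{p^k})\ge(1-C_2/p)\mu(\mathcal{W})$, and (ii) $q(G_{p^i,p^j})<M\,q(G)$ for all $(i,j)\in\mathbb{Z}^2$ with $i\ne j$. $\mathcal{R}^\flat(G)=\mathcal{R}(G)\setminus\mathcal{R}^\sharp(G)$. $G$ is structured if for each $p\in\mathcal{R}(G)$ there is $k_p\in\mathbb{Z}$ with $(\operatorname{e}_p(v)-k_p,\operatorname{e}_p(w)-k_p)\in\{(-1,0),(0,-1),(0,0),(0,1),(1,0)\}$ for all $(v,w)\in\mathcal{E}$. A structured GCD subgraph is a GCD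 subgraph that is structured. *)

theory Defs
  imports "HOL-Computational_Algebra.Computational_Algebra"
begin

definition numer :: "rat \<Rightarrow> int" where
  "numer x = fst (quotient_of x)"

definition denom :: "rat \<Rightarrow> int" where
  "denom x = snd (quotient_of x)"

definition ep :: "nat \<Rightarrow> rat \<Rightarrow> int" where
  "ep p x = int (multiplicity (int p) (numer x)) - int (multiplicity (int p) (denom x))"

definition prime_in :: "nat \<Rightarrow> rat \<Rightarrow> bool" where
  "prime_in p x \<longleftrightarrow> int p dvd numer x * denom x"

definition muS :: "(rat \<Rightarrow> real) \<Rightarrow> rat set \<Rightarrow> real" where
  "muS \<mu> T = (\<Sum>t\<in>T. \<mu> t)"

definition muE :: "(rat \<Rightarrow> real) \<Rightarrow> (rat \<times> rat) set \<Rightarrow> real" where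
  "muE \<mu> E = (\<Sum>(v,w)\<in>E. \<mu> v * \<mu> w)"

definition density :: "(rat \<Rightarrow> real) \<Rightarrow> rat set \<Rightarrow> rat set \<Rightarrow> (rat \<times> rat) set \<Rightarrow> real" where
  "density \<mu> V W E = (if E = {} then 0 else muE \<mu> E / (muS \<mu> V * muS \<mu> W))"

definition mu_theta :: "real \<Rightarrow> (rat \<Rightarrow> real) \<Rightarrow> rat set \<Rightarrow> rat set \<Rightarrow> (rat \<times> rat) set \<Rightarrow> real" where
  "mu_theta \<theta> \<mu> V W E = density \<mu> V W E powr \<theta> * muS \<mu> V * muS \<mu> W"

definition weighted_bipartite_graph ::
  "(rat \<Rightarrow> real) \<Rightarrow> rat set \<Rightarrow> rat set \<Rightarrow> (rat \<times> rat) set \<Rightarrow> bool" where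
  "weighted_bipartite_graph \<mu> V W E \<longleftrightarrow>
     (\<forall>x>0. \<mu> x > 0) \<and> finite V \<and> finite W \<and> V \<subseteq> {x. x > 0} \<and> W \<subseteq> {x. x > 0}
     \<and> E \<subseteq> V \<times> W"

definition maximal :: "real \<Rightarrow> (rat \<Rightarrow> real) \<Rightarrow> rat set \<Rightarrow> rat set \<Rightarrow> (rat \<times> rat) set \<Rightarrow> bool" where
  "maximal \<theta> \<mu> V W E \<longleftrightarrow>
     (\<forall>V' W' E'. V' \<subseteq> V \<longrightarrow> W' \<subseteq> W \<longrightarrow> E' \<subseteq> E \<inter> (V' \<times> W') \<longrightarrow>
        mu_theta \<theta> \<mu> V' W' E' \<le> mu_theta \<theta> \<mu> V W E)"

definition gcd_graph ::
  "(rat \<Rightarrow> real) \<Rightarrow> rat set \<Rightarrow> rat set \<Rightarrow> (rat \<times> rat) set \<Rightarrow> nat set \<Rightarrow>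
   (nat \<Rightarrow> int) \<Rightarrow> (nat \<Rightarrow> int) \<Rightarrow> bool" where
  "gcd_graph \<mu> V W E P f g \<longleftrightarrow>
     weighted_bipartite_graph \<mu> V W E \<and> (\<forall>p\<in>P. prime p) \<and>
     (\<forall>p\<in>P. \<forall>v\<in>V. \<forall>w\<in>W.
        (int p) ^ nat (f p) dvd numer v \<and> (int p) ^ nat (g p) dvd numer w \<and>
        (int p) ^ nat (- f p) dvd denom v \<and> (int p) ^ nat (- g p) dvd denom w \<and>
        ((v, w) \<in> E \<longrightarrow>
           multiplicity (int p) (gcd (numer v) (numer w)) = min (nat (f p)) (nat (g p)) \<and>
           multiplicity (int p) (gcd (denom v) (denom w)) = min (nat (- f p)) (nat (- g p))))"

text \<open>Quality. The product over P only has non-trivial factors at primes with f p \<noteq> g p.\<close>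
definition quality ::
  "real \<Rightarrow> (rat \<Rightarrow> real) \<Rightarrow> rat set \<Rightarrow> rat set \<Rightarrow> (rat \<times> rat) set \<Rightarrow> nat set \<Rightarrow>
   (nat \<Rightarrow> int) \<Rightarrow> (nat \<Rightarrow> int) \<Rightarrow> real" where
  "quality \<theta> \<mu> V W E P f g =
     mu_theta \<theta> \<mu> V W E * (\<Prod>p\<in>{p\<in>P. f p \<noteq> g p}. real p ^ nat \<bar>f p - g p\<bar>)"

definition gcd_subgraph ::
  "(rat \<Rightarrow> real) \<Rightarrow> rat set \<Rightarrow> rat set \<Rightarrow> (rat \<times> rat) set \<Rightarrow> nat set \<Rightarrow>
   (nat \<Rightarrow> int) \<Rightarrow> (nat \<Rightarrow> int) \<Rightarrow>
   rat set \<Rightarrow> rat set \<Rightarrow> (rat \<times> rat) set \<Rightarrow> nat set \<Rightarrow>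
   (nat \<Rightarrow> int) \<Rightarrow> (nat \<Rightarrow> int) \<Rightarrow> bool" where
  "gcd_subgraph \<mu> V' W' E' P' f' g' V W E P f g \<longleftrightarrow>
     gcd_graph \<mu> V' W' E' P' f' g' \<and> V' \<subseteq> V \<and> W' \<subseteq> W \<and> E' \<subseteq> E \<and> P \<subseteq> P' \<and>
     (\<forall>p\<in>P. f' p = f p \<and> g' p = g p)"

definition Vpk :: "nat \<Rightarrow> int \<Rightarrow> rat set \<Rightarrow> rat set" where
  "Vpk p k V = {v\<in>V. ep p v = k}"

definition R_set :: "nat set \<Rightarrow> (rat \<times> rat) set \<Rightarrow> nat set" where
  "R_set P E = {p. prime p \<and> p \<notin> P \<and>
      (\<exists>(v, w)\<in>E. int p dvd gcd (numer v) (numer w) * gcd (denom v) (denom w))}"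

definition C1 :: "real \<Rightarrow> real" where "C1 \<tau> = 10^4 / \<tau>"
definition C2 :: "real \<Rightarrow> real \<Rightarrow> real" where "C2 \<tau> M = 10 * M * C1 \<tau> ^ 3"
definition C4 :: "real \<Rightarrow> real \<Rightarrow> real" where "C4 \<tau> M = 10^10 * M^2 * C2 \<tau> M ^ 2"
definition C6 :: "real \<Rightarrow> real \<Rightarrow> real" where
  "C6 \<tau> M = Max {C4 \<tau> M, 10^4 * M * C2 \<tau> M, C2 \<tau> M powr (10 / \<tau>)}"
definition C8 :: "real \<Rightarrow> real \<Rightarrow> real" where "C8 \<tau> M = 100 * M * C2 \<tau> M"

definition R_sharp ::
  "real \<Rightarrow> real \<Rightarrow> (rat \<Rightarrow> real) \<Rightarrow> rat set \<Rightarrow> rat set \<Rightarrow> (rat \<times> rat) set \<Rightarrow> nat set \<Rightarrow>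
   (nat \<Rightarrow> int) \<Rightarrow> (nat \<Rightarrow> int) \<Rightarrow> nat set" where
  "R_sharp \<tau> M \<mu> V W E P f g = {p \<in> R_set P E.
     (\<exists>k::int. muS \<mu> (Vpk p k V) \<ge> (1 - C2 \<tau> M / real p) * muS \<mu> V \<and>
               muS \<mu> (Vpk p k W) \<ge> (1 - C2 \<tau> M / real p) * muS \<mu> W) \<and>
     (\<forall>i j::int. i \<noteq> j \<longrightarrow>
        quality (2 + \<tau>) \<mu> (Vpk p i V) (Vpk p j W) (E \<inter> (Vpk p i V \<times> Vpk p j W))
                (insert p P) (f(p := i)) (g(p := j))
        < M * quality (2 + \<tau>) \<mu> V W E P f g)}"

definition R_flat ::
  "real \<Rightarrow> real \<Rightarrow> (rat \<Rightarrow> real) \<Rightarrow> rat set \<Rightarrow> rat set \<Rightarrow> (rat \<times> rat) set \<Rightarrow> nat set \<Rightarrow>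
   (nat \<Rightarrow> int) \<Rightarrow> (nat \<Rightarrow> int) \<Rightarrow> nat set" where
  "R_flat \<tau> M \<mu> V W E P f g = R_set P E - R_sharp \<tau> M \<mu> V W E P f g"

definition structured :: "nat set \<Rightarrow> (rat \<times> rat) set \<Rightarrow> bool" where
  "structured P E \<longleftrightarrow> (\<forall>p\<in>R_set P E. \<exists>k::int. \<forall>(v, w)\<in>E.
      (ep p v - k, ep p w - k) \<in> {(-1, 0), (0, -1), (0, 0), (0, 1), (1, 0)})"

end

theory Submission
  imports Defs
begin


lemma numer_denom: "x = of_int (numer x) / of_int (denom x)"
  unfolding numer_def denom_def by (rule quotient_of_div) simp

lemma denom_pos: "denom x > 0"
  unfolding denom_def by (rule quotient_of_denom_pos')

lemma coprime_numer_denom: "coprime (numer x) (denom x)"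
  unfolding numer_def denom_def by (rule quotient_of_coprime) simp

lemma numer_nz: "x \<noteq> 0 \<Longrightarrow> numer x \<noteq> 0"
  using numer_denom[of x] by auto

lemma ep_frac:
  assumes p: "prime p" and c: "c \<noteq> 0" and d: "d \<noteq> 0" and x: "x = of_int c / of_int d"
  shows "ep p x = int (multiplicity (int p) c) - int (multiplicity (int p) d)"
proof -
  have xnz: "x \<noteq> 0" using x c d by simp
  have dn: "denom x \<noteq> 0" using denom_pos[of x] by simp
  have nn: "numer x \<noteq> 0" using numer_nz[OF xnz] .
  have "of_int (numer x) / of_int (denom x) = (of_int c / of_int d :: rat)"
    using numer_denom[of x] x by simp
  then have "of_int (numer x) * of_int d = (of_int c * of_int (denom x) :: rat)"
    using dn d by (simp add: field_simps)
  then have eq: "numer x * d = c * denom x"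
    by (metis of_int_eq_iff of_int_mult)
  have pe: "prime_elem (int p)" using p by simp
  have "multiplicity (int p) (numer x * d) = multiplicity (int p) (c * denom x)"
    using eq by simp
  then have "multiplicity (int p) (numer x) + multiplicity (int p) d =
             multiplicity (int p) c + multiplicity (int p) (denom x)"
    using pe nn dn c d by (simp add: prime_elem_multiplicity_mult_distrib)
  then show ?thesis unfolding ep_def by linarith
qed

lemma ep_div:
  assumes p: "prime p" and v: "v > 0" and w: "w > 0"
  shows "ep p (v / w) = ep p v - ep p w"
proof -
  have nv: "numer v \<noteq> 0" "numer w \<noteq> 0" using numer_nz v w by auto
  have dv: "denom v \<noteq> 0" "denom w \<noteq> 0" using denom_pos by (metis less_irrefl)+
  have e1: "v / w = (of_int (numer v) / of_int (denom v)) / (of_int (numer w) / of_int (denom w))"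
    by (metis numer_denom)
  have "v / w = of_int (numer v * denom w) / of_int (denom v * numer w)"
    unfolding e1 using nv dv by (simp add: field_simps)
  then have "ep p (v/w) = int (multiplicity (int p) (numer v * denom w)) - int (multiplicity (int p) (denom v * numer w))"
    using ep_frac[OF p, of "numer v * denom w" "denom v * numer w" "v/w"] nv dv by simp
  also have "\<dots> = ep p v - ep p w"
    using nv dv p by (simp add: prime_elem_multiplicity_mult_distrib ep_def)
  finally show ?thesis .
qed

lemma prime_in_ep:
  assumes p: "prime p" and x: "x \<noteq> 0" and pi: "prime_in p x"
  shows "ep p x \<noteq> 0"
proof -
  have pp: "prime (int p)" using p by simp
  have nn: "numer x \<noteq> 0" using numer_nz[OF x] .
  have dn: "denom x \<noteq> 0" using denom_pos[of x] by simp
  have cop: "coprime (numer x) (denom x)" by (rule coprime_numer_denom)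
  from pi have "int p dvd numer x \<or> int p dvd denom x"
    unfolding prime_in_def using pp prime_dvd_mult_iff by blast
  then show ?thesis
  proof
    assume h: "int p dvd numer x"
    then have "\<not> int p dvd denom x" using cop pp
      by (meson coprime_common_divisor not_prime_unit)
    then have "multiplicity (int p) (denom x) = 0" by (simp add: not_dvd_imp_multiplicity_0)
    moreover have "multiplicity (int p) (numer x) \<ge> 1"
      using h nn pp multiplicity_gt_zero_iff[of "numer x" "int p"] prime_gt_1_nat[OF p] by simp
    ultimately show ?thesis unfolding ep_def by simp
  next
    assume h: "int p dvd denom x"
    then have "\<not> int p dvd numer x" using cop pp
      by (meson coprime_common_divisor not_prime_unit)
    then have "multiplicity (int p) (numer x) = 0" by (simp add: not_dvd_imp_multiplicity_0)
    moreover have "multiplicity (int p) (denom x) \<ge> 1"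
      using h dn pp multiplicity_gt_zero_iff[of "denom x" "int p"] prime_gt_1_nat[OF p] by simp
    ultimately show ?thesis unfolding ep_def by simp
  qed
qed



lemma key_ineq:
  fixes e1 a A e c \<theta> :: real
  assumes e1: "e1 \<ge> 0" and a: "a > 0" and A: "A > 0" and e: "e > 0" and c: "c > 0" and th: "\<theta> > 0"
    and h: "(e1/a) powr \<theta> * a \<le> c * ((e/A) powr \<theta> * A)"
  shows "e1 \<le> c powr (1/\<theta>) * e * (a/A) powr (1 - 1/\<theta>)"
proof -
  have h1: "(e1/a) powr \<theta> \<le> c * (e/A) powr \<theta> * (A/a)"
    using h a by (simp add: field_simps)
  have "((e1/a) powr \<theta>) powr (1/\<theta>) \<le> (c * (e/A) powr \<theta> * (A/a)) powr (1/\<theta>)"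
    by (rule powr_mono2) (use h1 th in auto)
  also have "((e1/a) powr \<theta>) powr (1/\<theta>) = e1/a"
    using th e1 a by (simp add: powr_powr)
  also have "(c * (e/A) powr \<theta> * (A/a)) powr (1/\<theta>) = c powr (1/\<theta>) * ((e/A) powr \<theta>) powr (1/\<theta>) * (A/a) powr (1/\<theta>)"
    by (simp only: powr_mult)
  also have "((e/A) powr \<theta>) powr (1/\<theta>) = e/A"
    using th e A by (simp add: powr_powr)
  finally have h2: "e1/a \<le> c powr (1/\<theta>) * (e/A) * (A/a) powr (1/\<theta>)" .
  have "(a/A) powr (1 - 1/\<theta>) = (a/A) powr 1 / (a/A) powr (1/\<theta>)"
    by (rule powr_diff)
  also have "\<dots> = (a/A) * (A/a) powr (1/\<theta>)"
    using a A by (simp add: powr_divide divide_simps)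
  finally have "(a/A) powr (1 - 1/\<theta>) = (a/A) * (A/a) powr (1/\<theta>)" .
  then have "c powr (1/\<theta>) * e * (a/A) powr (1 - 1/\<theta>) = a * (c powr (1/\<theta>) * (e/A) * (A/a) powr (1/\<theta>))"
    using a A by (simp add: field_simps)
  moreover have "e1 \<le> a * (c powr (1/\<theta>) * (e/A) * (A/a) powr (1/\<theta>))"
    using h2 a by (simp add: field_simps)
  ultimately show ?thesis by simp
qed

lemma geom_partial:
  fixes r :: real
  shows "(\<Sum>m\<in>{d..<d+n}. r^m) * (1 - r) = r^d - r^(d+n)"
proof (induction n)
  case 0 show ?case by simp
next
  case (Suc n)
  have e: "(\<Sum>m\<in>{d..<d+Suc n}. r^m) = (\<Sum>m\<in>{d..<d+n}. r^m) + r^(d+n)" by simp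
  have "((\<Sum>m\<in>{d..<d+n}. r^m) + r^(d+n)) * (1 - r) = (\<Sum>m\<in>{d..<d+n}. r^m) * (1-r) + r^(d+n) * (1-r)"
    by (simp add: distrib_right)
  also have "\<dots> = r^d - r^(d+n) + r^(d+n) * (1-r)" using Suc.IH by simp
  also have "\<dots> = r^d - r^(d+Suc n)" by (simp add: algebra_simps)
  finally show ?case unfolding e .
qed

lemma geom_set_bound:
  fixes r :: real and S :: "nat set"
  assumes fin: "finite S" and r: "0 \<le> r" "r < 1" and ge: "\<forall>m\<in>S. d \<le> m"
  shows "(\<Sum>m\<in>S. r^m) \<le> r^d / (1 - r)"
proof -
  define N where "N = Suc (Max (insert d S))"
  have sub: "S \<subseteq> {d..<d + (N - d)}"
  proof
    fix m assume m: "m \<in> S"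
    then have "m \<le> Max (insert d S)" using fin by simp
    then show "m \<in> {d..<d + (N - d)}" using ge m unfolding N_def by auto
  qed
  have "(\<Sum>m\<in>S. r^m) \<le> (\<Sum>m\<in>{d..<d + (N - d)}. r^m)"
    by (rule sum_mono2) (use sub r in auto)
  also have "\<dots> = (r^d - r^(d + (N-d))) / (1 - r)"
    using geom_partial[of r d "N-d"] r by (simp add: field_simps)
  also have "\<dots> \<le> r^d / (1-r)"
    using r by (simp add: divide_right_mono)
  finally show ?thesis .
qed

lemma geom_int_bound:
  fixes r :: real and J :: "int set" and k :: int
  assumes fin: "finite J" and r: "0 \<le> r" "r < 1" and d: "d \<ge> 1"
    and ge: "\<forall>j\<in>J. int d \<le> \<bar>j - k\<bar>"
  shows "(\<Sum>j\<in>J. r ^ nat \<bar>j - k\<bar>) \<le> 2 * r^d / (1 - r)"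
proof -
  define J1 where "J1 = {j\<in>J. j > k}"
  define J2 where "J2 = {j\<in>J. j < k}"
  have JJ: "J = J1 \<union> J2" using ge d unfolding J1_def J2_def by force
  have disj: "J1 \<inter> J2 = {}" unfolding J1_def J2_def by auto
  have f1: "finite J1" "finite J2" using fin unfolding J1_def J2_def by auto
  have s1: "(\<Sum>j\<in>J1. r ^ nat \<bar>j - k\<bar>) \<le> r^d/(1-r)"
  proof -
    have inj: "inj_on (\<lambda>j. nat \<bar>j - k\<bar>) J1" unfolding J1_def by (auto simp: inj_on_def)
    have "(\<Sum>j\<in>J1. r ^ nat \<bar>j - k\<bar>) = (\<Sum>m\<in>(\<lambda>j. nat \<bar>j - k\<bar>) ` J1. r ^ m)"
      using sum.reindex[OF inj, of "\<lambda>m. r^m"] by simp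
    also have "\<dots> \<le> r^d/(1-r)"
      by (rule geom_set_bound) (use f1 r ge in \<open>auto simp: J1_def\<close>)
    finally show ?thesis .
  qed
  have s2: "(\<Sum>j\<in>J2. r ^ nat \<bar>j - k\<bar>) \<le> r^d/(1-r)"
  proof -
    have inj: "inj_on (\<lambda>j. nat \<bar>j - k\<bar>) J2" unfolding J2_def by (auto simp: inj_on_def)
    have "(\<Sum>j\<in>J2. r ^ nat \<bar>j - k\<bar>) = (\<Sum>m\<in>(\<lambda>j. nat \<bar>j - k\<bar>) ` J2. r ^ m)"
      using sum.reindex[OF inj, of "\<lambda>m. r^m"] by simp
    also have "\<dots> \<le> r^d/(1-r)"
      by (rule geom_set_bound) (use f1 r ge in \<open>auto simp: J2_def\<close>)
    finally show ?thesis .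
  qed
  have "(\<Sum>j\<in>J. r ^ nat \<bar>j - k\<bar>) = (\<Sum>j\<in>J1. r ^ nat \<bar>j - k\<bar>) + (\<Sum>j\<in>J2. r ^ nat \<bar>j - k\<bar>)"
    unfolding JJ by (rule sum.union_disjoint) (use f1 disj in auto)
  then show ?thesis using s1 s2 by simp
qed

lemma tail_term:
  fixes x \<eta> :: real
  assumes x: "x \<ge> 2" and eta: "\<eta> > 0"
  shows "x powr (-1-\<eta>) \<le> ((x-1) powr (-\<eta>) - x powr (-\<eta>)) / \<eta>"
proof -
  have x0: "x > 0" "x - 1 > 0" using x by auto
  have l: "ln (1 - 1/x) \<le> -1/x" using ln_le_minus_one[of "1 - 1/x"] x by simp
  have xe: "x - 1 = x * (1 - 1/x)" using x0 by (simp add: field_simps)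
  have E1: "(x-1) powr (-\<eta>) = x powr (-\<eta>) * (1 - 1/x) powr (-\<eta>)"
    unfolding xe by (rule powr_mult)
  have E2: "(1 - 1/x) powr (-\<eta>) = exp (-\<eta> * ln (1 - 1/x))"
    using x by (simp add: powr_def)
  have E3: "exp (-\<eta> * ln (1 - 1/x)) \<ge> exp (\<eta>/x)"
  proof -
    have "\<eta> * ln (1 - 1/x) \<le> \<eta> * (-1/x)" using l eta by (intro mult_left_mono) auto
    then have "\<eta>/x \<le> -\<eta> * ln (1 - 1/x)" by simp
    then show ?thesis by simp
  qed
  have E4: "exp (\<eta>/x) \<ge> 1 + \<eta>/x" by simp
  have "(1 - 1/x) powr (-\<eta>) \<ge> 1 + \<eta>/x" using E2 E3 E4 by linarith
  then have "(x-1) powr (-\<eta>) \<ge> x powr (-\<eta>) * (1 + \<eta>/x)"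
    unfolding E1 by (metis mult_left_mono powr_ge_zero)
  then have "(x-1) powr (-\<eta>) - x powr (-\<eta>) \<ge> \<eta> * (x powr (-\<eta>) / x)"
    by (simp add: algebra_simps)
  moreover have "x powr (-\<eta>) / x = x powr (-1-\<eta>)"
    using x0 by (simp add: powr_diff powr_minus field_simps)
  ultimately show ?thesis using eta by (simp add: field_simps)
qed

lemma tail_sum:
  fixes S :: "nat set" and X \<eta> :: real
  assumes fin: "finite S" and X: "X \<ge> 2" and eta: "\<eta> > 0" and big: "\<forall>p\<in>S. real p > X"
  shows "(\<Sum>p\<in>S. real p powr (-1-\<eta>)) \<le> (X - 1) powr (-\<eta>) / \<eta>"
proof -
  define N where "N = nat \<lfloor>X\<rfloor>"
  have N1: "real N \<ge> X - 1" "N \<ge> 2" unfolding N_def using X by linarith+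
  have SN: "\<forall>p\<in>S. p \<ge> Suc N"
  proof
    fix p assume "p \<in> S"
    then have "X < real p" using big by auto
    then have "\<lfloor>X\<rfloor> < int p" by linarith
    then have "nat \<lfloor>X\<rfloor> < p" using X by (simp add: nat_less_iff)
    then show "p \<ge> Suc N" unfolding N_def by simp
  qed
  define g where "g = (\<lambda>q::nat. real q powr (-\<eta>))"
  define K where "K = Suc (Max (insert N S))"
  have sub: "S \<subseteq> {Suc N..<K}"
  proof
    fix m assume m: "m \<in> S"
    then have "m \<le> Max (insert N S)" using fin by simp
    then show "m \<in> {Suc N..<K}" using SN m unfolding K_def by auto
  qed
  have "N \<le> Max (insert N S)" using fin by simp
  then have NK: "N < K" unfolding K_def by simp
  have "(\<Sum>p\<in>S. real p powr (-1-\<eta>)) \<le> (\<Sum>p\<in>S. (g (p - 1) - g p) / \<eta>)"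
  proof (rule sum_mono)
    fix p assume "p \<in> S"
    then have p: "real p \<ge> 2" "p \<ge> 1" using SN N1 by auto
    then show "real p powr (-1-\<eta>) \<le> (g (p - 1) - g p) / \<eta>"
      using tail_term[OF p(1) eta] unfolding g_def by (simp add: of_nat_diff)
  qed
  also have "\<dots> \<le> (\<Sum>p\<in>{Suc N..<K}. (g (p - 1) - g p) / \<eta>)"
  proof (rule sum_mono2)
    show "finite {Suc N..<K}" by simp
    show "S \<subseteq> {Suc N..<K}" by (rule sub)
    fix p assume "p \<in> {Suc N..<K} - S"
    then have "p \<ge> 2" using N1 by auto
    then have "g p \<le> g (p - 1)" unfolding g_def using eta
      by (intro powr_mono2') (auto simp: of_nat_diff)
    then show "0 \<le> (g (p - 1) - g p) / \<eta>" using eta by simp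
  qed
  also have "\<dots> = (\<Sum>p\<in>{Suc N..<K}. g (p - 1) - g p) / \<eta>"
    by (simp add: sum_divide_distrib)
  also have "(\<Sum>p\<in>{Suc N..<K}. g (p - 1) - g p) = g N - g (K - 1)"
  proof -
    have "\<And>m. (\<Sum>p\<in>{Suc N..<Suc N + m}. g (p - 1) - g p) = g N - g (N + m)"
    proof -
      fix m show "(\<Sum>p\<in>{Suc N..<Suc N + m}. g (p - 1) - g p) = g N - g (N + m)"
        by (induction m) auto
    qed
    from this[of "K - Suc N"] show ?thesis using NK by (simp add: Suc_diff_Suc)
  qed
  also have "(g N - g (K - 1)) / \<eta> \<le> g N / \<eta>"
    using eta unfolding g_def by (simp add: divide_right_mono)
  also have "g N \<le> (X - 1) powr (-\<eta>)"
    unfolding g_def using N1 X eta by (intro powr_mono2') auto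
  then have "g N / \<eta> \<le> (X - 1) powr (-\<eta>) / \<eta>" using eta by (simp add: divide_right_mono)
  finally show ?thesis .
qed


lemma pw_bsr:
  fixes C p s t :: real
  assumes "C > 0" "p > 0" "s + t = 1"
  shows "(C/p) powr s * p powr (-t) = C powr s / p"
proof -
  have "(C/p) powr s * p powr (-t) = C powr s / (p powr s * p powr t)"
    using assms by (simp add: powr_divide powr_minus field_simps)
  also have "p powr s * p powr t = p" using assms by (simp add: powr_add[symmetric])
  finally show ?thesis .
qed
lemma pw_sq: "(x::real) \<ge> 0 \<Longrightarrow> (x * x) powr s = x powr (2*s)"
  by (simp add: powr_mult powr_add[symmetric])
lemma "(17/20::real) powr 3 = (17/20)^3" by (simp add: powr_numeral)
lemma pw_pow:
  assumes p: "(p::real) > 0" shows "(p powr (-t)) ^ m = 1 / (p ^ m) powr t"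
proof -
  have 1: "(p powr (-t))^m = p powr (real m * -t)" using p by (simp add: powr_power)
  have 2: "(p^m) powr t = p powr (real m * t)"
  proof -
    have "(p^m) powr t = (p powr real m) powr t" using p powr_realpow[of p m] by simp
    also have "\<dots> = p powr (real m * t)" by (rule powr_powr)
    finally show ?thesis .
  qed
  show ?thesis unfolding 1 2 by (simp add: powr_minus_divide)
qed


lemma muE_alt: "muE \<mu> E = (\<Sum>e\<in>E. \<mu> (fst e) * \<mu> (snd e))"
  unfolding muE_def by (simp add: case_prod_beta)

lemma mt_alt: "mu_theta \<theta> \<mu> V W E = (if E = {} then 0 else (muE \<mu> E / (muS \<mu> V * muS \<mu> W)) powr \<theta> * muS \<mu> V * muS \<mu> W)"
  unfolding mu_theta_def density_def by simp

lemma wbg_finE: "weighted_bipartite_graph \<mu> V W E \<Longrightarrow> finite E"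
  unfolding weighted_bipartite_graph_def by (meson finite_SigmaI finite_subset)

lemma wbg_wt_pos:
  assumes "weighted_bipartite_graph \<mu> V W E" "e \<in> E"
  shows "\<mu> (fst e) * \<mu> (snd e) > 0"
proof -
  have "fst e \<in> V" "snd e \<in> W" using assms unfolding weighted_bipartite_graph_def by auto
  then have "fst e > 0" "snd e > 0" using assms unfolding weighted_bipartite_graph_def by auto
  then show ?thesis using assms unfolding weighted_bipartite_graph_def by simp
qed

lemma wbg_mu_pos:
  assumes "weighted_bipartite_graph \<mu> V W E" "x \<in> V \<or> x \<in> W"
  shows "\<mu> x > 0"
  using assms unfolding weighted_bipartite_graph_def by auto

lemma muE_mono:
  assumes wb: "weighted_bipartite_graph \<mu> V W E" and s: "E1 \<subseteq> E2" "E2 \<subseteq> E"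
  shows "muE \<mu> E1 \<le> muE \<mu> E2"
  unfolding muE_alt
proof (rule sum_mono2)
  show "finite E2" using wbg_finE[OF wb] s finite_subset by blast
  show "E1 \<subseteq> E2" by (rule s(1))
  fix e assume "e \<in> E2 - E1"
  then have "e \<in> E" using s by auto
  from wbg_wt_pos[OF wb this] show "0 \<le> \<mu> (fst e) * \<mu> (snd e)" by simp
qed

lemma muE_nonneg:
  assumes wb: "weighted_bipartite_graph \<mu> V W E" and s: "E1 \<subseteq> E"
  shows "muE \<mu> E1 \<ge> 0"
  using muE_mono[OF wb, of "{}" E1] s by (simp add: muE_def)

lemma muE_pos:
  assumes wb: "weighted_bipartite_graph \<mu> V W E" and s: "E1 \<subseteq> E" "E1 \<noteq> {}"
  shows "muE \<mu> E1 > 0"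
  unfolding muE_alt
  by (rule sum_pos) (use wbg_finE[OF wb] s wbg_wt_pos[OF wb] in \<open>auto intro: finite_subset\<close>)

lemma muS_mono:
  assumes wb: "weighted_bipartite_graph \<mu> V W E" and s: "A \<subseteq> B" "B \<subseteq> V \<or> B \<subseteq> W"
  shows "muS \<mu> A \<le> muS \<mu> B"
  unfolding muS_def
proof (rule sum_mono2)
  show "finite B" using wb s unfolding weighted_bipartite_graph_def by (meson finite_subset)
  show "A \<subseteq> B" by (rule s(1))
  fix x assume "x \<in> B - A"
  then have "x \<in> V \<or> x \<in> W" using s by auto
  from wbg_mu_pos[OF wb this] show "0 \<le> \<mu> x" by simp
qed

lemma muS_pos:
  assumes wb: "weighted_bipartite_graph \<mu> V W E" and s: "A \<subseteq> V \<or> A \<subseteq> W" "A \<noteq> {}"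
  shows "muS \<mu> A > 0"
  unfolding muS_def
  by (rule sum_pos) (use wb s wbg_mu_pos[OF wb] in \<open>auto intro: finite_subset simp: weighted_bipartite_graph_def\<close>)

lemma muS_diff:
  assumes wb: "weighted_bipartite_graph \<mu> V W E" and s: "A \<subseteq> B" "B \<subseteq> V \<or> B \<subseteq> W"
  shows "muS \<mu> B = muS \<mu> A + muS \<mu> (B - A)"
proof -
  have "finite B" using wb s unfolding weighted_bipartite_graph_def by (auto intro: finite_subset)
  then show ?thesis unfolding muS_def using sum.subset_diff[OF s(1), of \<mu>] by simp
qed

lemma muE_diff:
  assumes wb: "weighted_bipartite_graph \<mu> V W E" and s: "A \<subseteq> B" "B \<subseteq> E"
  shows "muE \<mu> B = muE \<mu> A + muE \<mu> (B - A)"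
proof -
  have "finite B" using wbg_finE[OF wb] s by (auto intro: finite_subset)
  then show ?thesis unfolding muE_alt using sum.subset_diff[OF s(1), of "\<lambda>e. \<mu> (fst e) * \<mu> (snd e)"] by simp
qed

lemma muE_union:
  assumes wb: "weighted_bipartite_graph \<mu> V W E" and s: "A \<subseteq> E" "B \<subseteq> E"
  shows "muE \<mu> (A \<union> B) \<le> muE \<mu> A + muE \<mu> B"
proof -
  have f: "finite A" "finite B" using wbg_finE[OF wb] s by (auto intro: finite_subset)
  have "muE \<mu> (A \<union> B) = muE \<mu> A + muE \<mu> B - muE \<mu> (A \<inter> B)"
    unfolding muE_alt using sum_Un[OF f, of "\<lambda>e. \<mu> (fst e) * \<mu> (snd e)"] by simp
  moreover have "muE \<mu> (A \<inter> B) \<ge> 0" using muE_nonneg[OF wb, of "A \<inter> B"] s by blast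
  ultimately show ?thesis by simp
qed

lemma muE_UN:
  assumes wb: "weighted_bipartite_graph \<mu> V W E" and fin: "finite I" and s: "\<forall>i\<in>I. A i \<subseteq> E"
  shows "muE \<mu> (\<Union>i\<in>I. A i) \<le> (\<Sum>i\<in>I. muE \<mu> (A i))"
  using fin s
proof (induction I rule: finite_induct)
  case empty then show ?case by (simp add: muE_def)
next
  case (insert x F)
  have "muE \<mu> (\<Union>i\<in>insert x F. A i) = muE \<mu> (A x \<union> (\<Union>i\<in>F. A i))" by simp
  also have "\<dots> \<le> muE \<mu> (A x) + muE \<mu> (\<Union>i\<in>F. A i)"
    by (rule muE_union[OF wb]) (use insert in auto)
  also have "\<dots> \<le> muE \<mu> (A x) + (\<Sum>i\<in>F. muE \<mu> (A i))" using insert by simp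
  finally show ?case using insert by simp
qed

lemma edge_bound:
  fixes \<theta> c :: real
  assumes wb: "weighted_bipartite_graph \<mu> V W E" and ne: "E \<noteq> {}"
    and s: "V1 \<subseteq> V" "W1 \<subseteq> W" "E1 \<subseteq> E \<inter> (V1 \<times> W1)" and c: "c > 0" and th: "\<theta> > 0"
    and h: "mu_theta \<theta> \<mu> V1 W1 E1 \<le> c * mu_theta \<theta> \<mu> V W E"
  shows "muE \<mu> E1 \<le> c powr (1/\<theta>) * muE \<mu> E * ((muS \<mu> V1 * muS \<mu> W1)/(muS \<mu> V * muS \<mu> W)) powr (1 - 1/\<theta>)"
proof (cases "E1 = {}")
  case True
  have "muE \<mu> E1 = 0" using True by (simp add: muE_def)
  moreover have "muE \<mu> E \<ge> 0" using muE_nonneg[OF wb, of E] by simp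
  ultimately show ?thesis by simp
next
  case False
  have Vne: "V \<noteq> {}" "W \<noteq> {}" using ne wb unfolding weighted_bipartite_graph_def by auto
  have V1ne: "V1 \<noteq> {}" "W1 \<noteq> {}" using False s by auto
  have pos: "muS \<mu> V > 0" "muS \<mu> W > 0" "muS \<mu> V1 > 0" "muS \<mu> W1 > 0"
    using muS_pos[OF wb] Vne V1ne s by auto
  have e1: "muE \<mu> E1 > 0" using muE_pos[OF wb] False s by auto
  have e: "muE \<mu> E > 0" using muE_pos[OF wb] ne by auto
  have h': "(muE \<mu> E1 / (muS \<mu> V1 * muS \<mu> W1)) powr \<theta> * (muS \<mu> V1 * muS \<mu> W1)
      \<le> c * ((muE \<mu> E / (muS \<mu> V * muS \<mu> W)) powr \<theta> * (muS \<mu> V * muS \<mu> W))"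
    using h False ne unfolding mt_alt by (simp add: mult.assoc)
  show ?thesis
    by (rule key_ineq[OF _ _ _ e c th h']) (use e1 pos in auto)
qed

lemma markov:
  fixes wt X :: "'a \<Rightarrow> real"
  assumes fin: "finite E" and wt: "\<forall>e\<in>E. wt e > 0" and X: "\<forall>e\<in>E. X e \<ge> 0" and t: "t > 0"
    and B: "(\<Sum>e\<in>E. wt e * X e) \<le> B"
  shows "(\<Sum>e\<in>{e\<in>E. \<not> X e \<le> t}. wt e) \<le> B / t"
proof -
  have "t * (\<Sum>e\<in>{e\<in>E. \<not> X e \<le> t}. wt e) = (\<Sum>e\<in>{e\<in>E. \<not> X e \<le> t}. wt e * t)"
    by (simp add: sum_distrib_left mult.commute)
  also have "\<dots> \<le> (\<Sum>e\<in>{e\<in>E. \<not> X e \<le> t}. wt e * X e)"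
    by (rule sum_mono) (use wt in \<open>auto intro: mult_left_mono less_imp_le\<close>)
  also have "\<dots> \<le> (\<Sum>e\<in>E. wt e * X e)"
    by (rule sum_mono2) (use fin wt X in auto)
  also have "\<dots> \<le> B" by (rule B)
  finally show ?thesis using t by (simp add: field_simps)
qed



locale hyp =
  fixes \<tau> M :: real and \<mu> :: "rat \<Rightarrow> real" and V W :: "rat set" and E :: "(rat \<times> rat) set"
    and P :: "nat set" and f g :: "nat \<Rightarrow> int" and n :: nat and a :: "nat \<Rightarrow> nat \<Rightarrow> real"
  assumes tau: "0 < \<tau>" "\<tau> < 1/100" and M2: "M \<ge> 2"
    and gg: "gcd_graph \<mu> V W E P f g" and ne: "E \<noteq> {}"
    and mx: "maximal (2 + \<tau>) \<mu> V W E"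
    and Rbig: "R_set P E \<subseteq> {p. real p > C6 \<tau> M}"
    and flat: "R_flat \<tau> M \<mu> V W E P f g = {}"
    and n1: "n \<ge> 1"
    and apos: "\<And>p i. prime p \<Longrightarrow> i \<in> {1..n} \<Longrightarrow> a p i \<ge> 0"
begin

abbreviation "th \<equiv> 2 + \<tau>"
abbreviation "R \<equiv> R_set P E"
abbreviation "mV \<equiv> muS \<mu> V"
abbreviation "mW \<equiv> muS \<mu> W"
abbreviation "mE \<equiv> muE \<mu> E"
abbreviation "K2 \<equiv> C2 \<tau> M"
abbreviation "ss \<equiv> 1 - 1/th"
abbreviation "tt \<equiv> 1/th"
abbreviation "eta \<equiv> 1 - 2/th"

definition "Q0 = {q\<in>P. f q \<noteq> g q}"
definition "Pi0 = (\<Prod>q\<in>Q0. real q ^ nat \<bar>f q - g q\<bar>)"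
definition "kk p = (SOME k::int. muS \<mu> (Vpk p k V) \<ge> (1 - K2 / real p) * mV \<and>
               muS \<mu> (Vpk p k W) \<ge> (1 - K2 / real p) * mW)"
definition "rr p = real p powr (-tt)"
definition "bb p = K2 / real p"

lemma wb: "weighted_bipartite_graph \<mu> V W E"
  using gg unfolding gcd_graph_def by simp

lemma finE: "finite E" by (rule wbg_finE[OF wb])

lemma EVW: "E \<subseteq> V \<times> W" using wb unfolding weighted_bipartite_graph_def by simp

lemma Vne: "V \<noteq> {}" "W \<noteq> {}" using ne EVW by auto

lemma mpos: "mV > 0" "mW > 0" "mE > 0"
  using muS_pos[OF wb] muE_pos[OF wb] Vne ne by auto

lemma Vpos: "v \<in> V \<Longrightarrow> v > 0" "w \<in> W \<Longrightarrow> w > 0"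
  using wb unfolding weighted_bipartite_graph_def by auto

lemma Epos: "e \<in> E \<Longrightarrow> fst e > 0 \<and> snd e > 0"
  using EVW Vpos by auto

lemma th_facts: "th > 2" "th \<le> 3" "tt > 0" "tt \<le> 1/2" "ss \<ge> 1/2" "ss \<le> 1" "ss + tt = 1"
   "eta > 0" "eta \<le> tt" "2 * ss = 1 + eta" "eta = \<tau> / th"
proof -
  have t2: "\<tau> * \<tau> \<le> \<tau>" using tau by (simp add: mult_le_cancel_left1)
  show "th > 2" "th \<le> 3" "tt > 0" using tau by auto
  show "tt \<le> 1/2" "ss \<ge> 1/2" "ss \<le> 1" "ss + tt = 1" using tau by (auto simp: field_simps)
  show e: "eta = \<tau> / th" using tau by (simp add: field_simps)
  show "eta > 0" unfolding e using tau by simp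
  have "\<tau> / th \<le> 1 / th" using tau by (intro divide_right_mono) auto
  then show "eta \<le> tt" unfolding e by simp
  show "2 * ss = 1 + eta" using tau by (simp add: field_simps)
qed

lemma C_facts: "C1 \<tau> \<ge> 10^6" "K2 \<ge> 2 * 10^18" "M \<le> K2" "3 / \<tau> \<le> K2"
  "C6 \<tau> M \<ge> K2 powr (10 / \<tau>)" "C8 \<tau> M = 100 * M * K2"
proof -
  show c1: "C1 \<tau> \<ge> 10^6" using tau unfolding C1_def by (simp add: field_simps)
  then have c13: "C1 \<tau> ^ 3 \<ge> (10^6)^3" by (intro power_mono) auto
  have "M * C1 \<tau> ^ 3 \<ge> 2 * (10^6)^3" using c13 M2 by (intro mult_mono) auto
  then show "K2 \<ge> 2 * 10^18" unfolding C2_def by simp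
  have "M * 1 \<le> M * C1 \<tau> ^ 3" using c13 M2 by (intro mult_left_mono) auto
  then show "M \<le> K2" unfolding C2_def using M2 by simp
  have "3 / \<tau> \<le> C1 \<tau>" using tau unfolding C1_def by (simp add: divide_right_mono)
  moreover have "C1 \<tau> \<le> C1 \<tau> ^ 3"
  proof -
    have "C1 \<tau> ^ 1 \<le> C1 \<tau> ^ 3" using c1 by (intro power_increasing) auto
    then show ?thesis by simp
  qed
  moreover have "1 * C1 \<tau> ^ 3 \<le> (10 * M) * C1 \<tau> ^ 3" using M2 c13 c1 by (intro mult_right_mono) auto
  then have "C1 \<tau> ^ 3 \<le> K2" unfolding C2_def by simp
  ultimately show "3 / \<tau> \<le> K2" by linarith
  show "C6 \<tau> M \<ge> K2 powr (10 / \<tau>)" unfolding C6_def by (rule Max_ge) auto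
  show "C8 \<tau> M = 100 * M * K2" unfolding C8_def by simp
qed

lemma C6_ge: "C6 \<tau> M \<ge> K2"
proof -
  have "K2 \<ge> 1" using C_facts by simp
  moreover have "10 / \<tau> \<ge> 1" using tau by (simp add: field_simps)
  ultimately have "K2 powr 1 \<le> K2 powr (10/\<tau>)" by (intro powr_mono) auto
  then show ?thesis using C_facts \<open>K2 \<ge> 1\<close> by simp
qed

lemma R_fin: "finite R"
proof -
  define x where "x e = gcd (numer (fst e)) (numer (snd e)) * gcd (denom (fst e)) (denom (snd e))" for e
  have xnz: "x e \<noteq> 0" if "e \<in> E" for e
  proof -
    have "fst e \<noteq> 0" using Epos[OF that] by simp
    then have "numer (fst e) \<noteq> 0" by (rule numer_nz)
    moreover have "denom (fst e) \<noteq> 0" using denom_pos[of "fst e"] by simp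
    ultimately show ?thesis unfolding x_def by simp
  qed
  have "R \<subseteq> (\<Union>e\<in>E. {p. int p \<le> \<bar>x e\<bar>})"
  proof
    fix p assume "p \<in> R"
    then obtain e where e: "e \<in> E" "int p dvd x e" unfolding R_set_def x_def by auto
    then have "\<bar>int p\<bar> \<le> \<bar>x e\<bar>" using xnz[OF e(1)] by (intro dvd_imp_le_int) auto
    then show "p \<in> (\<Union>e\<in>E. {p. int p \<le> \<bar>x e\<bar>})" using e by auto
  qed
  moreover have "finite (\<Union>e\<in>E. {p. int p \<le> \<bar>x e\<bar>})"
  proof (rule finite_UN_I[OF finE])
    fix e have "{p. int p \<le> \<bar>x e\<bar>} \<subseteq> {..nat \<bar>x e\<bar>}" by auto
    then show "finite {p. int p \<le> \<bar>x e\<bar>}" by (rule finite_subset) simp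
  qed
  ultimately show ?thesis by (rule finite_subset)
qed

lemma R_props:
  assumes "p \<in> R"
  shows "prime p" "p \<notin> P" "real p > C6 \<tau> M" "p \<in> R_sharp \<tau> M \<mu> V W E P f g"
  using assms Rbig flat unfolding R_set_def R_flat_def by auto

lemma R_big: "p \<in> R \<Longrightarrow> real p > K2"
  using R_props(3) C6_ge by fastforce

lemma Q0_fin: "finite Q0"
proof -
  obtain v0 w0 where vw: "v0 \<in> V" "w0 \<in> W" using Vne by blast
  define x where "x = numer v0 * denom v0 * numer w0 * denom w0"
  have nz: "numer v0 \<noteq> 0" "numer w0 \<noteq> 0" using numer_nz Vpos vw by (metis less_irrefl)+
  have dz: "denom v0 \<noteq> 0" "denom w0 \<noteq> 0" using denom_pos by (metis less_irrefl)+
  have xnz: "x \<noteq> 0" unfolding x_def using nz dz by simp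
  have pw: "int q dvd y" if "int q ^ nat k dvd y" "k \<noteq> 0" "k \<ge> 0" for q k y
  proof -
    have "int q dvd int q ^ nat k" using that by (intro dvd_power) auto
    then show ?thesis using that dvd_trans by blast
  qed
  have "Q0 \<subseteq> {q. int q \<le> \<bar>x\<bar>}"
  proof
    fix q assume q: "q \<in> Q0"
    then have qP: "q \<in> P" and fg: "f q \<noteq> g q" unfolding Q0_def by auto
    have d: "int q ^ nat (f q) dvd numer v0" "int q ^ nat (g q) dvd numer w0"
         "int q ^ nat (- f q) dvd denom v0" "int q ^ nat (- g q) dvd denom w0"
      using gg qP vw unfolding gcd_graph_def by blast+
    have "int q dvd numer v0 \<or> int q dvd denom v0 \<or> int q dvd numer w0 \<or> int q dvd denom w0"
    proof (cases "f q = 0")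
      case True
      then have "g q \<noteq> 0" using fg by simp
      then show ?thesis using pw[OF d(2)] pw[of q "- g q" "denom w0"] d(4) by (cases "g q > 0") auto
    next
      case False
      then show ?thesis using pw[OF d(1)] pw[of q "- f q" "denom v0"] d(3) by (cases "f q > 0") auto
    qed
    then have "int q dvd x" unfolding x_def by auto
    then have "\<bar>int q\<bar> \<le> \<bar>x\<bar>" using xnz by (intro dvd_imp_le_int) auto
    then show "q \<in> {q. int q \<le> \<bar>x\<bar>}" by simp
  qed
  moreover have "finite {q. int q \<le> \<bar>x\<bar>}"
    by (rule finite_subset[of _ "{..nat \<bar>x\<bar>}"]) auto
  ultimately show ?thesis by (rule finite_subset)
qed

lemma Pi0_pos: "Pi0 > 0"
  unfolding Pi0_def
proof (rule prod_pos)
  fix q assume "q \<in> Q0"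
  then have "prime q" using gg unfolding Q0_def gcd_graph_def by auto
  then have "real q > 0" using prime_gt_0_nat by simp
  then show "0 < real q ^ nat \<bar>f q - g q\<bar>" by simp
qed

lemma quality_ij:
  assumes p: "p \<in> R" and ij: "i \<noteq> j"
  shows "quality th \<mu> (Vpk p i V) (Vpk p j W) (E \<inter> (Vpk p i V \<times> Vpk p j W)) (insert p P) (f(p := i)) (g(p := j))
     = mu_theta th \<mu> (Vpk p i V) (Vpk p j W) (E \<inter> (Vpk p i V \<times> Vpk p j W)) * (real p ^ nat \<bar>i - j\<bar> * Pi0)"
proof -
  have pP: "p \<notin> P" using R_props[OF p] by simp
  have set: "{q \<in> insert p P. (f(p := i)) q \<noteq> (g(p := j)) q} = insert p Q0"
    using pP ij unfolding Q0_def by auto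
  have pQ: "p \<notin> Q0" using pP unfolding Q0_def by auto
  have "(\<Prod>q\<in>insert p Q0. real q ^ nat \<bar>(f(p := i)) q - (g(p := j)) q\<bar>)
      = real p ^ nat \<bar>i - j\<bar> * (\<Prod>q\<in>Q0. real q ^ nat \<bar>(f(p := i)) q - (g(p := j)) q\<bar>)"
    using Q0_fin pQ by simp
  also have "(\<Prod>q\<in>Q0. real q ^ nat \<bar>(f(p := i)) q - (g(p := j)) q\<bar>) = Pi0"
    unfolding Pi0_def by (rule prod.cong) (use pQ in auto)
  finally show ?thesis unfolding quality_def set by simp
qed

lemma sharp_mt:
  assumes p: "p \<in> R" and ij: "i \<noteq> j"
  shows "mu_theta th \<mu> (Vpk p i V) (Vpk p j W) (E \<inter> (Vpk p i V \<times> Vpk p j W))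
     \<le> (M / real p ^ nat \<bar>i - j\<bar>) * mu_theta th \<mu> V W E"
proof -
  have "quality th \<mu> (Vpk p i V) (Vpk p j W) (E \<inter> (Vpk p i V \<times> Vpk p j W)) (insert p P) (f(p := i)) (g(p := j))
        < M * quality th \<mu> V W E P f g"
    using R_props(4)[OF p] ij unfolding R_sharp_def by auto
  then have h: "mu_theta th \<mu> (Vpk p i V) (Vpk p j W) (E \<inter> (Vpk p i V \<times> Vpk p j W)) * (real p ^ nat \<bar>i - j\<bar> * Pi0)
       < M * (mu_theta th \<mu> V W E * Pi0)"
    unfolding quality_ij[OF p ij] unfolding quality_def Q0_def[symmetric] Pi0_def[symmetric] .
  have pp: "real p ^ nat \<bar>i - j\<bar> > 0" using prime_gt_0_nat[OF R_props(1)[OF p]] by simp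
  have "mu_theta th \<mu> (Vpk p i V) (Vpk p j W) (E \<inter> (Vpk p i V \<times> Vpk p j W)) * real p ^ nat \<bar>i - j\<bar>
       \<le> M * mu_theta th \<mu> V W E"
    using h Pi0_pos by (simp add: mult.assoc[symmetric] mult_less_cancel_right)
  then show ?thesis using pp by (simp add: field_simps)
qed

lemma kk_prop:
  assumes p: "p \<in> R"
  shows "muS \<mu> (Vpk p (kk p) V) \<ge> (1 - K2 / real p) * mV \<and> muS \<mu> (Vpk p (kk p) W) \<ge> (1 - K2 / real p) * mW"
proof -
  have "\<exists>k::int. muS \<mu> (Vpk p k V) \<ge> (1 - K2 / real p) * mV \<and> muS \<mu> (Vpk p k W) \<ge> (1 - K2 / real p) * mW"
    using R_props(4)[OF p] unfolding R_sharp_def by auto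
  then show ?thesis unfolding kk_def by (rule someI_ex)
qed

lemma off_mass:
  assumes p: "p \<in> R"
  shows "muS \<mu> (V - Vpk p (kk p) V) \<le> bb p * mV" "muS \<mu> (W - Vpk p (kk p) W) \<le> bb p * mW"
proof -
  have s1: "Vpk p (kk p) V \<subseteq> V" "Vpk p (kk p) W \<subseteq> W" unfolding Vpk_def by auto
  have "mV = muS \<mu> (Vpk p (kk p) V) + muS \<mu> (V - Vpk p (kk p) V)"
    by (rule muS_diff[OF wb s1(1)]) simp
  then show "muS \<mu> (V - Vpk p (kk p) V) \<le> bb p * mV" using kk_prop[OF p] unfolding bb_def
    by (simp add: algebra_simps)
  have "mW = muS \<mu> (Vpk p (kk p) W) + muS \<mu> (W - Vpk p (kk p) W)"
    by (rule muS_diff[OF wb s1(2)]) simp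
  then show "muS \<mu> (W - Vpk p (kk p) W) \<le> bb p * mW" using kk_prop[OF p] unfolding bb_def
    by (simp add: algebra_simps)
qed

lemma p_facts:
  assumes p: "p \<in> R"
  shows "real p > 0" "bb p > 0" "bb p \<le> 1" "rr p \<ge> 0" "rr p \<le> 1/2" "real p \<ge> 8"
proof -
  have K: "K2 \<ge> 2 * 10^18" using C_facts by simp
  have pb: "real p > K2" by (rule R_big[OF p])
  show p0: "real p > 0" using pb K by simp
  show "bb p > 0" unfolding bb_def using K p0 by simp
  show "bb p \<le> 1" unfolding bb_def using pb p0 by simp
  show "rr p \<ge> 0" unfolding rr_def by simp
  show p8: "real p \<ge> 8" using pb K by simp
  have "real p powr (1/3) \<le> real p powr tt" using th_facts p8 by (intro powr_mono) (auto simp: field_simps)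
  moreover have "(8::real) powr (1/3) \<le> real p powr (1/3)" using p8 by (intro powr_mono2) auto
  moreover have "(8::real) powr (1/3) = 2"
  proof -
    have "(8::real) = 2 powr 3" by simp
    then have "(8::real) powr (1/3) = 2 powr (3 * (1/3))" by (metis powr_powr)
    then show ?thesis by simp
  qed
  ultimately have "real p powr tt \<ge> 2" by linarith
  then show "rr p \<le> 1/2" unfolding rr_def by (simp add: powr_minus_divide divide_simps)
qed

lemma class_bound:
  assumes p: "p \<in> R" and ij: "i \<noteq> j"
  shows "muE \<mu> (E \<inter> (Vpk p i V \<times> Vpk p j W)) \<le> M powr tt * rr p ^ nat \<bar>i - j\<bar> * mE * bb p powr ss"
proof -
  define m where "m = nat \<bar>i - j\<bar>"
  have p0: "real p > 0" using p_facts[OF p] by simp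
  have c: "M / real p ^ m > 0" using M2 p0 by simp
  have sub: "Vpk p i V \<subseteq> V" "Vpk p j W \<subseteq> W" unfolding Vpk_def by auto
  have eb: "muE \<mu> (E \<inter> (Vpk p i V \<times> Vpk p j W)) \<le> (M / real p ^ m) powr (1/th) * mE *
      ((muS \<mu> (Vpk p i V) * muS \<mu> (Vpk p j W)) / (mV * mW)) powr (1 - 1/th)"
    by (rule edge_bound[OF wb ne sub]) (use c th_facts sharp_mt[OF p ij] in \<open>auto simp: m_def\<close>)
  have e1: "(M / real p ^ m) powr (1/th) = M powr tt * rr p ^ m"
    unfolding rr_def using pw_pow[OF p0, of tt m] M2 p0 by (simp add: powr_divide)
  have nn: "muS \<mu> (Vpk p i V) \<ge> 0" "muS \<mu> (Vpk p j W) \<ge> 0"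
    using muS_mono[OF wb, of "{}" "Vpk p i V"] muS_mono[OF wb, of "{}" "Vpk p j W"] sub
    by (auto simp: muS_def)
  have le: "muS \<mu> (Vpk p i V) \<le> mV" "muS \<mu> (Vpk p j W) \<le> mW"
    using muS_mono[OF wb] sub by auto
  have ratio: "(muS \<mu> (Vpk p i V) * muS \<mu> (Vpk p j W)) / (mV * mW) \<le> bb p"
  proof (cases "i = kk p")
    case False
    then have "Vpk p i V \<subseteq> V - Vpk p (kk p) V" unfolding Vpk_def by auto
    then have "muS \<mu> (Vpk p i V) \<le> bb p * mV" using muS_mono[OF wb, of "Vpk p i V" "V - Vpk p (kk p) V"] off_mass[OF p] by auto
    then have "muS \<mu> (Vpk p i V) * muS \<mu> (Vpk p j W) \<le> (bb p * mV) * mW"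
      using nn le by (intro mult_mono) auto
    then show ?thesis using mpos by (simp add: divide_simps mult.commute mult.left_commute)
  next
    case True
    then have "j \<noteq> kk p" using ij by simp
    then have "Vpk p j W \<subseteq> W - Vpk p (kk p) W" unfolding Vpk_def by auto
    then have "muS \<mu> (Vpk p j W) \<le> bb p * mW" using muS_mono[OF wb, of "Vpk p j W" "W - Vpk p (kk p) W"] off_mass[OF p] by auto
    then have "muS \<mu> (Vpk p i V) * muS \<mu> (Vpk p j W) \<le> mV * (bb p * mW)"
      using nn le by (intro mult_mono) auto
    then show ?thesis using mpos by (simp add: divide_simps mult.commute mult.left_commute)
  qed
  have "((muS \<mu> (Vpk p i V) * muS \<mu> (Vpk p j W)) / (mV * mW)) powr ss \<le> bb p powr ss"
    by (rule powr_mono2) (use ratio nn mpos th_facts in auto)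
  then have "(M / real p ^ m) powr (1/th) * mE * ((muS \<mu> (Vpk p i V) * muS \<mu> (Vpk p j W)) / (mV * mW)) powr (1 - 1/th)
      \<le> (M / real p ^ m) powr (1/th) * mE * bb p powr ss"
    using mpos by (intro mult_left_mono) auto
  with eb have "muE \<mu> (E \<inter> (Vpk p i V \<times> Vpk p j W)) \<le> (M / real p ^ m) powr (1/th) * mE * bb p powr ss"
    by linarith
  then have "muE \<mu> (E \<inter> (Vpk p i V \<times> Vpk p j W)) \<le> M powr tt * rr p ^ m * mE * bb p powr ss"
    unfolding e1 .
  then show ?thesis unfolding m_def .
qed

definition "Xa p = {e\<in>E. ep p (fst e) \<noteq> kk p \<and> ep p (snd e) \<noteq> kk p}"
definition "Ya p d = {e\<in>E. ep p (fst e) = kk p \<and> int d \<le> \<bar>ep p (snd e) - kk p\<bar>}"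
definition "Yb p d = {e\<in>E. ep p (snd e) = kk p \<and> int d \<le> \<bar>ep p (fst e) - kk p\<bar>}"
definition "Dp p = {e\<in>E. prime_in p (fst e / snd e)}"
definition "Bd p = {e\<in>E. (ep p (fst e) - kk p, ep p (snd e) - kk p) \<notin> {(-1, 0), (0, -1), (0, 0), (0, 1), (1, 0)}}"

lemma Xa_bound:
  assumes p: "p \<in> R"
  shows "muE \<mu> (Xa p) \<le> mE * (bb p * bb p) powr ss"
proof -
  define V1 where "V1 = V - Vpk p (kk p) V"
  define W1 where "W1 = W - Vpk p (kk p) W"
  have sub: "V1 \<subseteq> V" "W1 \<subseteq> W" "Xa p \<subseteq> E \<inter> (V1 \<times> W1)"
    unfolding V1_def W1_def Xa_def Vpk_def using EVW by auto
  have mt: "mu_theta th \<mu> V1 W1 (Xa p) \<le> 1 * mu_theta th \<mu> V W E"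
    using mx sub unfolding maximal_def by auto
  have eb: "muE \<mu> (Xa p) \<le> 1 powr (1/th) * mE * ((muS \<mu> V1 * muS \<mu> W1)/(mV * mW)) powr (1 - 1/th)"
    by (rule edge_bound[OF wb ne sub]) (use mt th_facts in auto)
  have nn: "muS \<mu> V1 \<ge> 0" "muS \<mu> W1 \<ge> 0"
    using muS_mono[OF wb, of "{}" V1] muS_mono[OF wb, of "{}" W1] sub by (auto simp: muS_def)
  have "muS \<mu> V1 * muS \<mu> W1 \<le> (bb p * mV) * (bb p * mW)"
    using off_mass[OF p] nn unfolding V1_def W1_def by (intro mult_mono) auto
  then have "(muS \<mu> V1 * muS \<mu> W1)/(mV * mW) \<le> bb p * bb p"
    using mpos by (simp add: divide_simps mult.commute mult.left_commute)
  then have "((muS \<mu> V1 * muS \<mu> W1)/(mV * mW)) powr ss \<le> (bb p * bb p) powr ss"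
    by (intro powr_mono2) (use nn mpos th_facts in auto)
  then have "mE * ((muS \<mu> V1 * muS \<mu> W1)/(mV * mW)) powr ss \<le> mE * (bb p * bb p) powr ss"
    using mpos by (intro mult_left_mono) auto
  then show ?thesis using eb by simp
qed

abbreviation "wt e \<equiv> \<mu> (fst e) * \<mu> (snd e)"

lemma Ya_bound:
  assumes p: "p \<in> R" and d: "d \<ge> 1"
  shows "muE \<mu> (Ya p d) \<le> M powr tt * mE * bb p powr ss * (2 * rr p ^ d / (1 - rr p))"
proof -
  define S where "S = Ya p d"
  define J where "J = (\<lambda>e. ep p (snd e)) ` S"
  have finS: "finite S" unfolding S_def Ya_def using finE by simp
  have finJ: "finite J" unfolding J_def using finS by simp
  have "muE \<mu> S = (\<Sum>j\<in>J. \<Sum>e\<in>{x. x \<in> S \<and> ep p (snd x) = j}. wt e)"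
    unfolding muE_alt J_def by (rule sum.group[symmetric]) (use finS in auto)
  also have "\<dots> \<le> (\<Sum>j\<in>J. M powr tt * rr p ^ nat \<bar>j - kk p\<bar> * mE * bb p powr ss)"
  proof (rule sum_mono)
    fix j assume j: "j \<in> J"
    then have jk: "int d \<le> \<bar>j - kk p\<bar>" unfolding J_def S_def Ya_def by auto
    then have jk': "kk p \<noteq> j" using d by auto
    have sub: "{x. x \<in> S \<and> ep p (snd x) = j} \<subseteq> E \<inter> (Vpk p (kk p) V \<times> Vpk p j W)"
      unfolding S_def Ya_def Vpk_def using EVW by auto
    have "(\<Sum>e\<in>{x. x \<in> S \<and> ep p (snd x) = j}. wt e) = muE \<mu> {x. x \<in> S \<and> ep p (snd x) = j}"
      by (simp add: muE_alt)
    also have "\<dots> \<le> muE \<mu> (E \<inter> (Vpk p (kk p) V \<times> Vpk p j W))"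
      by (rule muE_mono[OF wb sub]) auto
    also have "\<dots> \<le> M powr tt * rr p ^ nat \<bar>kk p - j\<bar> * mE * bb p powr ss"
      by (rule class_bound[OF p jk'])
    finally show "(\<Sum>e\<in>{x. x \<in> S \<and> ep p (snd x) = j}. wt e) \<le> M powr tt * rr p ^ nat \<bar>j - kk p\<bar> * mE * bb p powr ss"
      by (simp add: abs_minus_commute)
  qed
  also have "\<dots> = M powr tt * mE * bb p powr ss * (\<Sum>j\<in>J. rr p ^ nat \<bar>j - kk p\<bar>)"
    by (simp add: sum_distrib_left mult_ac)
  also have "\<dots> \<le> M powr tt * mE * bb p powr ss * (2 * rr p ^ d / (1 - rr p))"
  proof (rule mult_left_mono)
    show "(\<Sum>j\<in>J. rr p ^ nat \<bar>j - kk p\<bar>) \<le> 2 * rr p ^ d / (1 - rr p)"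
      by (rule geom_int_bound) (use finJ p_facts[OF p] d in \<open>auto simp: J_def S_def Ya_def\<close>)
    show "0 \<le> M powr tt * mE * bb p powr ss" using mpos by simp
  qed
  finally show ?thesis unfolding S_def .
qed

lemma Yb_bound:
  assumes p: "p \<in> R" and d: "d \<ge> 1"
  shows "muE \<mu> (Yb p d) \<le> M powr tt * mE * bb p powr ss * (2 * rr p ^ d / (1 - rr p))"
proof -
  define S where "S = Yb p d"
  define J where "J = (\<lambda>e. ep p (fst e)) ` S"
  have finS: "finite S" unfolding S_def Yb_def using finE by simp
  have finJ: "finite J" unfolding J_def using finS by simp
  have "muE \<mu> S = (\<Sum>j\<in>J. \<Sum>e\<in>{x. x \<in> S \<and> ep p (fst x) = j}. wt e)"
    unfolding muE_alt J_def by (rule sum.group[symmetric]) (use finS in auto)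
  also have "\<dots> \<le> (\<Sum>j\<in>J. M powr tt * rr p ^ nat \<bar>j - kk p\<bar> * mE * bb p powr ss)"
  proof (rule sum_mono)
    fix j assume j: "j \<in> J"
    then have jk: "int d \<le> \<bar>j - kk p\<bar>" unfolding J_def S_def Yb_def by auto
    then have jk': "j \<noteq> kk p" using d by auto
    have sub: "{x. x \<in> S \<and> ep p (fst x) = j} \<subseteq> E \<inter> (Vpk p j V \<times> Vpk p (kk p) W)"
      unfolding S_def Yb_def Vpk_def using EVW by auto
    have "(\<Sum>e\<in>{x. x \<in> S \<and> ep p (fst x) = j}. wt e) = muE \<mu> {x. x \<in> S \<and> ep p (fst x) = j}"
      by (simp add: muE_alt)
    also have "\<dots> \<le> muE \<mu> (E \<inter> (Vpk p j V \<times> Vpk p (kk p) W))"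
      by (rule muE_mono[OF wb sub]) auto
    also have "\<dots> \<le> M powr tt * rr p ^ nat \<bar>j - kk p\<bar> * mE * bb p powr ss"
      by (rule class_bound[OF p jk'])
    finally show "(\<Sum>e\<in>{x. x \<in> S \<and> ep p (fst x) = j}. wt e) \<le> M powr tt * rr p ^ nat \<bar>j - kk p\<bar> * mE * bb p powr ss" .
  qed
  also have "\<dots> = M powr tt * mE * bb p powr ss * (\<Sum>j\<in>J. rr p ^ nat \<bar>j - kk p\<bar>)"
    by (simp add: sum_distrib_left mult_ac)
  also have "\<dots> \<le> M powr tt * mE * bb p powr ss * (2 * rr p ^ d / (1 - rr p))"
  proof (rule mult_left_mono)
    show "(\<Sum>j\<in>J. rr p ^ nat \<bar>j - kk p\<bar>) \<le> 2 * rr p ^ d / (1 - rr p)"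
      by (rule geom_int_bound) (use finJ p_facts[OF p] d in \<open>auto simp: J_def S_def Yb_def\<close>)
    show "0 \<le> M powr tt * mE * bb p powr ss" using mpos by simp
  qed
  finally show ?thesis unfolding S_def .
qed

lemma r_simp:
  assumes p: "p \<in> R"
  shows "2 * rr p ^ d / (1 - rr p) \<le> 4 * rr p ^ d"
proof -
  have r: "rr p \<ge> 0" "rr p \<le> 1/2" using p_facts[OF p] by auto
  then have "rr p ^ d \<ge> 0" by simp
  moreover have "4 * rr p ^ d * (1/2) \<le> 4 * rr p ^ d * (1 - rr p)"
    using r \<open>rr p ^ d \<ge> 0\<close> by (intro mult_left_mono) auto
  ultimately have "2 * rr p ^ d \<le> 4 * rr p ^ d * (1 - rr p)" by simp
  then show ?thesis using r by (simp add: divide_simps)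
qed

lemma bsr:
  assumes p: "p \<in> R"
  shows "bb p powr ss * rr p = K2 powr ss / real p"
  unfolding bb_def rr_def
  by (rule pw_bsr) (use C_facts p_facts[OF p] th_facts in auto)

lemma K2_ge1: "K2 \<ge> 1" using C_facts by simp

lemma pow_le_self: "(x::real) \<ge> 1 \<Longrightarrow> y \<le> 1 \<Longrightarrow> x powr y \<le> x"
  using powr_mono[of y 1 x] by simp

lemma K2ss: "K2 powr ss \<le> K2" using pow_le_self[OF K2_ge1] th_facts by simp
lemma Mtt: "M powr tt \<le> M" using pow_le_self[of M tt] M2 th_facts by simp

lemma Ya1_final:
  assumes p: "p \<in> R"
  shows "M powr tt * mE * bb p powr ss * (2 * rr p ^ 1 / (1 - rr p)) \<le> 4 * M * K2 / real p * mE"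
proof -
  have p0: "real p > 0" using p_facts[OF p] by simp
  have "M powr tt * mE * bb p powr ss * (2 * rr p ^ 1 / (1 - rr p)) \<le> M powr tt * mE * bb p powr ss * (4 * rr p ^ 1)"
    using r_simp[OF p, of 1] mpos by (intro mult_left_mono) auto
  also have "\<dots> = 4 * M powr tt * mE * (bb p powr ss * rr p)" by simp
  also have "\<dots> = 4 * M powr tt * mE * (K2 powr ss / real p)" using bsr[OF p] by simp
  also have "\<dots> \<le> 4 * M * mE * (K2 / real p)"
    using Mtt K2ss mpos p0 M2 by (intro mult_mono divide_right_mono) auto
  also have "\<dots> = 4 * M * K2 / real p * mE" by simp
  finally show ?thesis .
qed

lemma D_sub:
  assumes p: "p \<in> R"
  shows "Dp p \<subseteq> Xa p \<union> Ya p 1 \<union> Yb p 1"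
proof
  fix e assume e: "e \<in> Dp p"
  then have eE: "e \<in> E" and pi: "prime_in p (fst e / snd e)" unfolding Dp_def by auto
  have pos: "fst e > 0" "snd e > 0" using Epos[OF eE] by auto
  have "ep p (fst e / snd e) \<noteq> 0"
    by (rule prime_in_ep[OF R_props(1)[OF p] _ pi]) (use pos in simp)
  then have ne: "ep p (fst e) \<noteq> ep p (snd e)" using ep_div[OF R_props(1)[OF p] pos] by simp
  show "e \<in> Xa p \<union> Ya p 1 \<union> Yb p 1"
    using ne eE unfolding Xa_def Ya_def Yb_def by auto
qed

lemma D_bound:
  assumes p: "p \<in> R"
  shows "muE \<mu> (Dp p) \<le> 10 * M * K2 / real p * mE"
proof -
  have p0: "real p > 0" using p_facts[OF p] by simp
  have subs: "Xa p \<subseteq> E" "Ya p 1 \<subseteq> E" "Yb p 1 \<subseteq> E" unfolding Xa_def Ya_def Yb_def by auto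
  have "muE \<mu> (Dp p) \<le> muE \<mu> (Xa p \<union> Ya p 1 \<union> Yb p 1)"
    by (rule muE_mono[OF wb D_sub[OF p]]) (use subs in auto)
  also have "\<dots> \<le> muE \<mu> (Xa p \<union> Ya p 1) + muE \<mu> (Yb p 1)"
    by (rule muE_union[OF wb]) (use subs in auto)
  also have "muE \<mu> (Xa p \<union> Ya p 1) \<le> muE \<mu> (Xa p) + muE \<mu> (Ya p 1)"
    by (rule muE_union[OF wb]) (use subs in auto)
  finally have h: "muE \<mu> (Dp p) \<le> muE \<mu> (Xa p) + muE \<mu> (Ya p 1) + muE \<mu> (Yb p 1)" by simp
  have "(bb p * bb p) powr ss = bb p powr (2 * ss)"
    using p_facts[OF p] by (simp add: pw_sq)
  also have "\<dots> \<le> bb p powr 1"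
    by (rule powr_mono') (use p_facts[OF p] th_facts in auto)
  finally have "(bb p * bb p) powr ss \<le> bb p" using p_facts[OF p] by simp
  then have x: "muE \<mu> (Xa p) \<le> mE * (K2 / real p)"
    using Xa_bound[OF p] mpos unfolding bb_def by (smt (verit) mult_left_mono)
  have y: "muE \<mu> (Ya p 1) \<le> 4 * M * K2 / real p * mE" using Ya_bound[OF p, of 1] Ya1_final[OF p] by simp
  have z: "muE \<mu> (Yb p 1) \<le> 4 * M * K2 / real p * mE" using Yb_bound[OF p, of 1] Ya1_final[OF p] by simp
  define u where "u = M * K2 / real p * mE"
  have u1: "mE * (K2 / real p) \<le> 2 * u"
  proof -
    have "1 * (K2 / real p * mE) \<le> (2 * M) * (K2 / real p * mE)"
      using M2 K2_ge1 p0 mpos by (intro mult_right_mono) auto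
    then show ?thesis unfolding u_def by (simp add: mult_ac)
  qed
  have u2: "4 * M * K2 / real p * mE = 4 * u" "10 * M * K2 / real p * mE = 10 * u" unfolding u_def by simp_all
  show ?thesis using h x y z u1 u2 by linarith
qed

lemma Bd_sub:
  assumes p: "p \<in> R"
  shows "Bd p \<subseteq> Xa p \<union> Ya p 2 \<union> Yb p 2"
proof
  fix e assume e: "e \<in> Bd p"
  then have eE: "e \<in> E" and nb: "(ep p (fst e) - kk p, ep p (snd e) - kk p) \<notin> {(-1, 0), (0, -1), (0, 0), (0, 1), (1, 0)}"
    unfolding Bd_def by auto
  show "e \<in> Xa p \<union> Ya p 2 \<union> Yb p 2"
  proof (cases "ep p (fst e) = kk p")
    case True
    then have "ep p (snd e) - kk p \<noteq> -1 \<and> ep p (snd e) - kk p \<noteq> 0 \<and> ep p (snd e) - kk p \<noteq> 1" using nb by simp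
    then have "2 \<le> \<bar>ep p (snd e) - kk p\<bar>" by arith
    then show ?thesis using True eE unfolding Ya_def by simp
  next
    case False
    show ?thesis
    proof (cases "ep p (snd e) = kk p")
      case True
      then have "ep p (fst e) - kk p \<noteq> -1 \<and> ep p (fst e) - kk p \<noteq> 0 \<and> ep p (fst e) - kk p \<noteq> 1" using nb by simp
      then have "2 \<le> \<bar>ep p (fst e) - kk p\<bar>" by arith
      then show ?thesis using True eE unfolding Yb_def by simp
    next
      case False
      then show ?thesis using \<open>ep p (fst e) \<noteq> kk p\<close> eE unfolding Xa_def by simp
    qed
  qed
qed

lemma pinv: "(p::real) > 0 \<Longrightarrow> p powr (-1 - x) = p powr (-x) / p"
proof -
  assume p: "p > 0"
  have "p powr (-1 + -x) = p powr (-1) * p powr (-x)" by (rule powr_add)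
  then show ?thesis using p by (simp add: powr_minus_divide)
qed

lemma Ya2_final:
  assumes p: "p \<in> R"
  shows "M powr tt * mE * bb p powr ss * (2 * rr p ^ 2 / (1 - rr p)) \<le> 4 * M * K2 * real p powr (-1 - eta) * mE"
proof -
  have p0: "real p > 0" using p_facts[OF p] by simp
  have "M powr tt * mE * bb p powr ss * (2 * rr p ^ 2 / (1 - rr p)) \<le> M powr tt * mE * bb p powr ss * (4 * rr p ^ 2)"
    using r_simp[OF p, of 2] mpos by (intro mult_left_mono) auto
  also have "\<dots> = 4 * M powr tt * mE * (bb p powr ss * rr p) * rr p" by (simp add: power2_eq_square)
  also have "\<dots> = 4 * M powr tt * mE * K2 powr ss * (real p powr (-tt) / real p)" using bsr[OF p] unfolding rr_def by simp
  also have "real p powr (-tt) / real p = real p powr (-1 - tt)" using pinv[OF p0] by simp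
  also have "4 * M powr tt * mE * K2 powr ss * real p powr (-1 - tt) \<le> 4 * M * mE * K2 * real p powr (-1 - eta)"
  proof -
    have "real p powr (-1 - tt) \<le> real p powr (-1 - eta)"
      by (rule powr_mono) (use th_facts p_facts[OF p] in auto)
    then show ?thesis using Mtt K2ss mpos p0 M2 K2_ge1 by (intro mult_mono) auto
  qed
  also have "4 * M * mE * K2 * real p powr (-1 - eta) = 4 * M * K2 * real p powr (-1 - eta) * mE" by simp
  finally show ?thesis .
qed

lemma Bd_bound:
  assumes p: "p \<in> R"
  shows "muE \<mu> (Bd p) \<le> 9 * M * K2^2 * real p powr (-1 - eta) * mE"
proof -
  have p0: "real p > 0" using p_facts[OF p] by simp
  have subs: "Xa p \<subseteq> E" "Ya p 2 \<subseteq> E" "Yb p 2 \<subseteq> E" unfolding Xa_def Ya_def Yb_def by auto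
  have "muE \<mu> (Bd p) \<le> muE \<mu> (Xa p \<union> Ya p 2 \<union> Yb p 2)"
    by (rule muE_mono[OF wb Bd_sub[OF p]]) (use subs in auto)
  also have "\<dots> \<le> muE \<mu> (Xa p \<union> Ya p 2) + muE \<mu> (Yb p 2)"
    by (rule muE_union[OF wb]) (use subs in auto)
  also have "muE \<mu> (Xa p \<union> Ya p 2) \<le> muE \<mu> (Xa p) + muE \<mu> (Ya p 2)"
    by (rule muE_union[OF wb]) (use subs in auto)
  finally have h: "muE \<mu> (Bd p) \<le> muE \<mu> (Xa p) + muE \<mu> (Ya p 2) + muE \<mu> (Yb p 2)" by simp
  define z where "z = real p powr (-1 - eta)"
  have z0: "z \<ge> 0" unfolding z_def by simp
  have "(bb p * bb p) powr ss = bb p powr (2 * ss)"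
    using p_facts[OF p] by (simp add: pw_sq)
  also have "\<dots> = bb p powr (1 + eta)" by (simp only: th_facts(10))
  also have "\<dots> = K2 powr (1 + eta) / real p powr (1 + eta)" unfolding bb_def by (simp add: powr_divide)
  also have "\<dots> = K2 powr (1 + eta) * z"
  proof -
    have "z = 1 / real p powr (1 + eta)" unfolding z_def using powr_minus_divide[of "real p" "1 + eta"] by simp
    then show ?thesis by simp
  qed
  also have "\<dots> \<le> K2 powr 2 * z"
    using z0 K2_ge1 th_facts by (intro mult_right_mono powr_mono) auto
  also have "K2 powr 2 = K2^2" using K2_ge1 by (simp add: powr_numeral)
  finally have bz: "(bb p * bb p) powr ss \<le> K2^2 * z" .
  have x: "muE \<mu> (Xa p) \<le> K2^2 * z * mE"
  proof -
    have "mE * (bb p * bb p) powr ss \<le> mE * (K2^2 * z)" using bz mpos by (intro mult_left_mono) auto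
    then show ?thesis using Xa_bound[OF p] by (simp add: mult_ac)
  qed
  have y: "muE \<mu> (Ya p 2) \<le> 4 * M * K2 * z * mE" using Ya_bound[OF p, of 2] Ya2_final[OF p] unfolding z_def by simp
  have w: "muE \<mu> (Yb p 2) \<le> 4 * M * K2 * z * mE" using Yb_bound[OF p, of 2] Ya2_final[OF p] unfolding z_def by simp
  define u where "u = K2^2 * z * mE"
  have u0: "u \<ge> 0" unfolding u_def using z0 mpos by simp
  have u1: "K2^2 * z * mE \<le> M * u" using M2 u0 mult_right_mono[of 1 M u] unfolding u_def by simp
  have u2: "4 * M * K2 * z * mE \<le> 4 * M * u"
  proof -
    have "K2 * 1 \<le> K2 * K2" using K2_ge1 by (intro mult_left_mono) auto
    then have "(4 * M * z * mE) * K2 \<le> (4 * M * z * mE) * K2^2" using M2 z0 mpos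
      by (intro mult_left_mono) (auto simp: power2_eq_square)
    then show ?thesis unfolding u_def by (simp add: mult_ac)
  qed
  have u3: "9 * M * K2^2 * real p powr (-1 - eta) * mE = 9 * M * u" unfolding u_def z_def by simp
  show ?thesis using h x y w u1 u2 u3 by linarith
qed

lemma const_bound: "9 * M * K2^2 * ((C6 \<tau> M - 1) powr (-eta) / eta) \<le> 1/20"
proof -
  have K: "K2 \<ge> 2 * 10^18" "M \<le> K2" "3 / \<tau> \<le> K2" "C6 \<tau> M \<ge> K2 powr (10 / \<tau>)" using C_facts by auto
  have e: "eta = \<tau> / th" "eta > 0" "eta \<le> 1/2" using th_facts by auto
  have "K2 \<ge> 2" using K by simp
  then have C6: "C6 \<tau> M \<ge> 2" using C6_ge by linarith
  have ie: "1 / eta \<le> K2"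
  proof -
    have "1 / eta = th / \<tau>" using e tau by simp
    also have "\<dots> \<le> 3 / \<tau>" using th_facts tau by (intro divide_right_mono) auto
    finally show ?thesis using K by linarith
  qed
  have k1: "K2 \<ge> 1" using K by simp
  have "(C6 \<tau> M - 1) powr eta \<ge> (K2 powr (10 / \<tau>) / 2) powr eta"
    using C6 K e by (intro powr_mono2) auto
  moreover have "(K2 powr (10 / \<tau>) / 2) powr eta = K2 powr (10 / th) / 2 powr eta"
  proof -
    have "(K2 powr (10 / \<tau>) / 2) powr eta = (K2 powr (10 / \<tau>)) powr eta / 2 powr eta" by (rule powr_divide)
    also have "(K2 powr (10 / \<tau>)) powr eta = K2 powr (10 / \<tau> * eta)" by (rule powr_powr)
    also have "10 / \<tau> * eta = 10 / th" using e tau by simp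
    finally show ?thesis .
  qed
  moreover have "2 powr eta \<le> (2::real)" using powr_mono[of eta 1 2] e by simp
  moreover have "K2 powr (10 / th) \<ge> K2 powr (9/2)"
  proof -
    have "9/2 \<le> 10 / th" using tau by (simp add: field_simps)
    then show ?thesis using k1 by (intro powr_mono) auto
  qed
  moreover have "K2 powr (9/2) \<ge> 360 * K2^4"
  proof -
    have "K2 powr (9/2) = K2 powr 4 * K2 powr (1/2)" by (simp add: powr_add[symmetric])
    also have "K2 powr 4 = K2^4" using k1 by (simp add: powr_numeral)
    also have "K2 powr (1/2) = sqrt K2" using k1 by (simp add: powr_half_sqrt)
    finally have eq: "K2 powr (9/2) = K2^4 * sqrt K2" .
    have "sqrt K2 \<ge> sqrt (360^2)" using K by (intro real_sqrt_le_mono) auto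
    then have "sqrt K2 \<ge> 360" by simp
    then show ?thesis unfolding eq using k1 by (simp add: mult.commute mult_left_mono)
  qed
  ultimately have A: "(C6 \<tau> M - 1) powr eta \<ge> 180 * K2^4"
  proof -
    assume a1: "(C6 \<tau> M - 1) powr eta \<ge> (K2 powr (10 / \<tau>) / 2) powr eta"
      and a2: "(K2 powr (10 / \<tau>) / 2) powr eta = K2 powr (10 / th) / 2 powr eta"
      and a3: "2 powr eta \<le> (2::real)" and a4: "K2 powr (10 / th) \<ge> K2 powr (9/2)"
      and a5: "K2 powr (9/2) \<ge> 360 * K2^4"
    have "K2 powr (10 / th) / 2 powr eta \<ge> K2 powr (10 / th) / 2"
      using a3 by (intro divide_left_mono) auto
    then show ?thesis using a1 a2 a4 a5 by linarith
  qed
  have Apos: "(C6 \<tau> M - 1) powr eta > 0" using C6 by simp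
  have pm: "(C6 \<tau> M - 1) powr (-eta) = 1 / (C6 \<tau> M - 1) powr eta" by (rule powr_minus_divide)
  have "(C6 \<tau> M - 1) powr (-eta) / eta = (1 / eta) / (C6 \<tau> M - 1) powr eta"
    unfolding pm by simp
  also have "\<dots> \<le> K2 / (180 * K2^4)"
    using ie A Apos k1 by (intro frac_le) auto
  finally have h1: "(C6 \<tau> M - 1) powr (-eta) / eta \<le> K2 / (180 * K2^4)" .
  have "9 * M * K2^2 * ((C6 \<tau> M - 1) powr (-eta) / eta) \<le> 9 * K2 * K2^2 * (K2 / (180 * K2^4))"
  proof -
    have nn: "0 \<le> (C6 \<tau> M - 1) powr (-eta) / eta" by (rule divide_nonneg_nonneg) (use e in auto)
    have "9 * M * K2^2 \<le> 9 * K2 * K2^2" using K by simp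
    then show ?thesis using h1 nn K M2 by (intro mult_mono) auto
  qed
  also have "\<dots> = 1/20" using k1 by (simp add: power_def field_simps)
  finally show ?thesis .
qed

lemma Bd_total: "(\<Sum>p\<in>R. muE \<mu> (Bd p)) \<le> mE / 20"
proof -
  have "(\<Sum>p\<in>R. muE \<mu> (Bd p)) \<le> (\<Sum>p\<in>R. 9 * M * K2^2 * mE * real p powr (-1 - eta))"
    by (rule sum_mono) (use Bd_bound in \<open>simp add: mult_ac\<close>)
  also have "\<dots> = 9 * M * K2^2 * mE * (\<Sum>p\<in>R. real p powr (-1 - eta))"
    by (simp add: sum_distrib_left)
  also have "\<dots> \<le> 9 * M * K2^2 * mE * ((C6 \<tau> M - 1) powr (-eta) / eta)"
  proof (rule mult_left_mono)
    show "(\<Sum>p\<in>R. real p powr (-1 - eta)) \<le> (C6 \<tau> M - 1) powr (-eta) / eta"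
      by (rule tail_sum[OF R_fin]) (use C6_ge C_facts th_facts R_props(3) in auto)
    show "0 \<le> 9 * M * K2^2 * mE" using M2 mpos by simp
  qed
  also have "\<dots> = mE * (9 * M * K2^2 * ((C6 \<tau> M - 1) powr (-eta) / eta))" by simp
  also have "\<dots> \<le> mE * (1/20)" using const_bound mpos by (intro mult_left_mono) auto
  finally show ?thesis by simp
qed

definition "T i = (\<Sum>p\<in>R. a p i / real p)"
definition "Xf i e = (\<Sum>p\<in>{p. prime_in p (fst e / snd e) \<and> p \<in> R}. a p i)"
definition "Viol i = {e\<in>E. \<not> Xf i e \<le> C8 \<tau> M * real n * T i}"

lemma Xf_alt: "Xf i e = (\<Sum>p\<in>R. if prime_in p (fst e / snd e) then a p i else 0)"
proof -
  have "{p. prime_in p (fst e / snd e) \<and> p \<in> R} = {p\<in>R. prime_in p (fst e / snd e)}" by auto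
  then show ?thesis unfolding Xf_def using sum.inter_filter[OF R_fin] by simp
qed

lemma exch: "(\<Sum>e\<in>E. wt e * Xf i e) = (\<Sum>p\<in>R. a p i * muE \<mu> (Dp p))"
proof -
  have "(\<Sum>e\<in>E. wt e * Xf i e) = (\<Sum>e\<in>E. \<Sum>p\<in>R. wt e * (if prime_in p (fst e / snd e) then a p i else 0))"
    unfolding Xf_alt by (simp add: sum_distrib_left)
  also have "\<dots> = (\<Sum>p\<in>R. \<Sum>e\<in>E. wt e * (if prime_in p (fst e / snd e) then a p i else 0))"
    by (rule sum.swap)
  also have "\<dots> = (\<Sum>p\<in>R. a p i * muE \<mu> (Dp p))"
  proof (rule sum.cong)
    fix p assume "p \<in> R"
    have "muE \<mu> (Dp p) = (\<Sum>e\<in>E. if prime_in p (fst e / snd e) then wt e else 0)"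
      unfolding muE_alt Dp_def by (rule sum.inter_filter[OF finE])
    have "(\<Sum>e\<in>E. wt e * (if prime_in p (fst e / snd e) then a p i else 0))
        = (\<Sum>e\<in>E. (if prime_in p (fst e / snd e) then wt e else 0) * a p i)"
      by (rule sum.cong) auto
    also have "\<dots> = (\<Sum>e\<in>E. if prime_in p (fst e / snd e) then wt e else 0) * a p i"
      by (rule sum_distrib_right[symmetric])
    finally show "(\<Sum>e\<in>E. wt e * (if prime_in p (fst e / snd e) then a p i else 0)) = a p i * muE \<mu> (Dp p)"
      using \<open>muE \<mu> (Dp p) = _\<close> by simp
  qed simp
  finally show ?thesis .
qed

lemma Xf_nonneg: "i \<in> {1..n} \<Longrightarrow> Xf i e \<ge> 0"
  unfolding Xf_def by (rule sum_nonneg) (use apos R_props(1) in auto)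

lemma viol_bound:
  assumes i: "i \<in> {1..n}"
  shows "muE \<mu> (Viol i) \<le> mE / (10 * real n)"
proof -
  have an: "\<forall>p\<in>R. a p i / real p \<ge> 0" using apos[OF _ i] R_props(1) by auto
  have T0: "T i \<ge> 0" unfolding T_def using an by (simp add: sum_nonneg)
  have n0: "real n > 0" using n1 by simp
  show ?thesis
  proof (cases "T i = 0")
    case True
    have iff: "(\<Sum>p\<in>R. a p i / real p) = 0 \<longleftrightarrow> (\<forall>p\<in>R. a p i / real p = 0)"
      by (rule sum_nonneg_eq_0_iff[OF R_fin]) (use an in blast)
    have "\<forall>p\<in>R. a p i / real p = 0" using iff True unfolding T_def by (rule iffD1)
    have z: "\<forall>p\<in>R. a p i = 0"
    proof
      fix p assume p: "p \<in> R"
      have "a p i / real p = 0" using p \<open>\<forall>p\<in>R. a p i / real p = 0\<close> by blast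
      moreover have "real p > 0" using p_facts(1)[OF p] .
      ultimately show "a p i = 0" by simp
    qed
    have "\<forall>e. Xf i e = 0" unfolding Xf_def by (intro allI sum.neutral) (use z in blast)
    then have "Viol i = {}" unfolding Viol_def using True by simp
    then show ?thesis using mpos n0 by (simp add: muE_def)
  next
    case False
    then have Tp: "T i > 0" using T0 by simp
    have t: "C8 \<tau> M * real n * T i > 0" using C_facts M2 n0 Tp by simp
    have B: "(\<Sum>e\<in>E. wt e * Xf i e) \<le> 10 * M * K2 * mE * T i"
    proof -
      have "(\<Sum>e\<in>E. wt e * Xf i e) = (\<Sum>p\<in>R. a p i * muE \<mu> (Dp p))" by (rule exch)
      also have "\<dots> \<le> (\<Sum>p\<in>R. a p i * (10 * M * K2 / real p * mE))"
      proof (rule sum_mono)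
        fix p assume p: "p \<in> R"
        have "a p i \<ge> 0" using apos[OF R_props(1)[OF p] i] .
        then show "a p i * muE \<mu> (Dp p) \<le> a p i * (10 * M * K2 / real p * mE)"
          by (rule mult_left_mono[OF D_bound[OF p]])
      qed
      also have "\<dots> = 10 * M * K2 * mE * T i" unfolding T_def by (simp add: sum_distrib_left mult_ac)
      finally show ?thesis .
    qed
    have "muE \<mu> (Viol i) = (\<Sum>e\<in>{e\<in>E. \<not> Xf i e \<le> C8 \<tau> M * real n * T i}. wt e)"
      unfolding Viol_def muE_alt ..
    also have "\<dots> \<le> 10 * M * K2 * mE * T i / (C8 \<tau> M * real n * T i)"
      by (rule markov[OF finE _ _ t B]) (use wbg_wt_pos[OF wb] Xf_nonneg[OF i] in auto)
    also have "\<dots> = mE / (10 * real n)"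
    proof -
      define Y where "Y = 10 * M * K2 * T i"
      have Y0: "Y > 0" unfolding Y_def using M2 K2_ge1 Tp by simp
      have e1: "10 * M * K2 * mE * T i = mE * Y" unfolding Y_def by simp
      have e2: "C8 \<tau> M * real n * T i = (10 * real n) * Y" unfolding Y_def C_facts(6) by simp
      show ?thesis unfolding e1 e2 using Y0 by simp
    qed
    finally show ?thesis .
  qed
qed

lemma main:
  "\<exists>V' W' E' P' f' g'.
     gcd_subgraph \<mu> V' W' E' P' f' g' V W E P f g \<and> structured P' E' \<and>
     E' \<noteq> {} \<and> maximal (2 + \<tau>) \<mu> V' W' E' \<and>
     (\<forall>i\<in>{1..n}. \<forall>(v, w)\<in>E'.
        (\<Sum>p\<in>{p. prime_in p (v / w) \<and> p \<in> R_set P E}. a p i)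
          \<le> C8 \<tau> M * real n * (\<Sum>p\<in>R_set P E. a p i / real p)) \<and>
     quality (2 + \<tau>) \<mu> V' W' E' P' f' g' \<ge> quality (2 + \<tau>) \<mu> V W E P f g / 2"
proof -
  define Eg where "Eg = {e\<in>E. (\<forall>p\<in>R. e \<notin> Bd p) \<and> (\<forall>i\<in>{1..n}. e \<notin> Viol i)}"
  have EgE: "Eg \<subseteq> E" unfolding Eg_def by auto
  have BdE: "\<forall>p\<in>R. Bd p \<subseteq> E" unfolding Bd_def by auto
  have ViE: "\<forall>i\<in>{1..n}. Viol i \<subseteq> E" unfolding Viol_def by auto
  have dsub: "E - Eg \<subseteq> (\<Union>p\<in>R. Bd p) \<union> (\<Union>i\<in>{1..n}. Viol i)"
  proof
    fix e assume "e \<in> E - Eg"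
    then have "e \<in> E" "\<not> ((\<forall>p\<in>R. e \<notin> Bd p) \<and> (\<forall>i\<in>{1..n}. e \<notin> Viol i))" unfolding Eg_def by auto
    then show "e \<in> (\<Union>p\<in>R. Bd p) \<union> (\<Union>i\<in>{1..n}. Viol i)" by blast
  qed
  have "muE \<mu> (E - Eg) \<le> muE \<mu> ((\<Union>p\<in>R. Bd p) \<union> (\<Union>i\<in>{1..n}. Viol i))"
    by (rule muE_mono[OF wb dsub]) (use BdE ViE in blast)
  also have "\<dots> \<le> muE \<mu> (\<Union>p\<in>R. Bd p) + muE \<mu> (\<Union>i\<in>{1..n}. Viol i)"
    by (rule muE_union[OF wb]) (use BdE ViE in blast)+
  also have "muE \<mu> (\<Union>p\<in>R. Bd p) \<le> (\<Sum>p\<in>R. muE \<mu> (Bd p))"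
    by (rule muE_UN[OF wb R_fin BdE])
  also have "muE \<mu> (\<Union>i\<in>{1..n}. Viol i) \<le> (\<Sum>i\<in>{1..n}. muE \<mu> (Viol i))"
    by (rule muE_UN[OF wb _ ViE]) simp
  also have "(\<Sum>i\<in>{1..n}. muE \<mu> (Viol i)) \<le> (\<Sum>i\<in>{1..n}. mE / (10 * real n))"
    by (rule sum_mono) (rule viol_bound)
  also have "(\<Sum>i\<in>{1..n}. mE / (10 * real n)) = mE / 10" using n1 by simp
  finally have dE: "muE \<mu> (E - Eg) \<le> (\<Sum>p\<in>R. muE \<mu> (Bd p)) + mE / 10" by simp
  have mEg: "muE \<mu> Eg \<ge> 17/20 * mE"
  proof -
    have "mE = muE \<mu> Eg + muE \<mu> (E - Eg)" by (rule muE_diff[OF wb EgE]) simp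
    then show ?thesis using dE Bd_total by linarith
  qed
  have Egne: "Eg \<noteq> {}"
  proof
    assume "Eg = {}"
    then have "muE \<mu> Eg = 0" by (simp add: muE_def)
    then show False using mEg mpos by simp
  qed
  define mtG where "mtG = mu_theta th \<mu> V W E"
  define x where "x = mE / (mV * mW)"
  have x0: "x > 0" unfolding x_def using mpos by simp
  have mtG_eq: "mtG = x powr th * mV * mW" unfolding mtG_def x_def mt_alt using ne by simp
  have mtG_pos: "mtG > 0" unfolding mtG_eq using x0 mpos by simp
  have mtg: "mu_theta th \<mu> V W Eg \<ge> mtG / 2"
  proof -
    define y where "y = muE \<mu> Eg / (mV * mW)"
    have "17/20 * mE / (mV * mW) \<le> muE \<mu> Eg / (mV * mW)"
      using mEg mpos by (intro divide_right_mono) auto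
    then have y: "y \<ge> 17/20 * x" unfolding y_def x_def by simp
    have "y powr th \<ge> (17/20 * x) powr th" using y x0 th_facts by (intro powr_mono2) auto
    also have "(17/20 * x) powr th = (17/20) powr th * x powr th" by (rule powr_mult)
    finally have h1: "y powr th \<ge> (17/20) powr th * x powr th" .
    have "(17/20::real) powr th \<ge> (17/20) powr 3" by (rule powr_mono') (use th_facts in auto)
    moreover have "(17/20::real) powr 3 = (17/20)^3" by (simp add: powr_numeral)
    moreover have "(17/20::real)^3 \<ge> 1/2" by (simp add: power3_eq_cube)
    ultimately have "(17/20::real) powr th \<ge> 1/2" by linarith
    then have "(17/20) powr th * x powr th \<ge> 1/2 * x powr th" by (intro mult_right_mono) auto
    with h1 have "y powr th \<ge> 1/2 * x powr th" by simp
    then have "y powr th * mV * mW \<ge> 1/2 * x powr th * mV * mW" using mpos by simp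
    moreover have "mu_theta th \<mu> V W Eg = y powr th * mV * mW" unfolding y_def mt_alt using Egne by simp
    ultimately show ?thesis unfolding mtG_eq by simp
  qed
  define S where "S = {(V'', W'', E''). V'' \<subseteq> V \<and> W'' \<subseteq> W \<and> E'' \<subseteq> Eg \<inter> (V'' \<times> W'')}"
  define F where "F = (\<lambda>(x, y, z). mu_theta th \<mu> x y z)"
  have finVW: "finite V" "finite W" using wb unfolding weighted_bipartite_graph_def by auto
  have finS: "finite S"
  proof (rule finite_subset)
    show "S \<subseteq> Pow V \<times> Pow W \<times> Pow E" unfolding S_def using EgE by auto
    show "finite (Pow V \<times> Pow W \<times> Pow E)" using finVW finE by simp
  qed
  have inS: "(V, W, Eg) \<in> S" unfolding S_def using EgE EVW by auto
  have neS: "F ` S \<noteq> {}" using inS by auto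
  have "Max (F ` S) \<in> F ` S" using finS neS by simp
  then obtain x0 where x0S: "x0 \<in> S" and x0m: "F x0 = Max (F ` S)" by auto
  have best: "\<forall>y\<in>S. F y \<le> F x0" unfolding x0m using finS by simp
  obtain V2 W2 E2 where x0e: "x0 = (V2, W2, E2)" by (cases x0) auto
  have sub2: "V2 \<subseteq> V" "W2 \<subseteq> W" "E2 \<subseteq> Eg \<inter> (V2 \<times> W2)" using x0S unfolding S_def x0e by auto
  have E2E: "E2 \<subseteq> E" using sub2 EgE by auto
  have Fbest: "mu_theta th \<mu> V2 W2 E2 \<ge> mu_theta th \<mu> V W Eg"
    using best inS unfolding x0e F_def by fastforce
  have mt2: "mu_theta th \<mu> V2 W2 E2 \<ge> mtG / 2" using Fbest mtg by simp
  have E2ne: "E2 \<noteq> {}"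
  proof
    assume "E2 = {}"
    then have "mu_theta th \<mu> V2 W2 E2 = 0" unfolding mt_alt by simp
    then show False using mt2 mtG_pos by simp
  qed
  have gg2: "gcd_graph \<mu> V2 W2 E2 P f g"
  proof -
    have wb2: "weighted_bipartite_graph \<mu> V2 W2 E2"
      using wb sub2 unfolding weighted_bipartite_graph_def by (auto intro: finite_subset)
    have "\<forall>p\<in>P. prime p" using gg unfolding gcd_graph_def by simp
    moreover have "\<forall>p\<in>P. \<forall>v\<in>V2. \<forall>w\<in>W2.
        (int p) ^ nat (f p) dvd numer v \<and> (int p) ^ nat (g p) dvd numer w \<and>
        (int p) ^ nat (- f p) dvd denom v \<and> (int p) ^ nat (- g p) dvd denom w \<and>
        ((v, w) \<in> E2 \<longrightarrow>
           multiplicity (int p) (gcd (numer v) (numer w)) = min (nat (f p)) (nat (g p)) \<and>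
           multiplicity (int p) (gcd (denom v) (denom w)) = min (nat (- f p)) (nat (- g p)))"
    proof (intro ballI)
      fix p v w assume "p \<in> P" "v \<in> V2" "w \<in> W2"
      then have "p \<in> P" "v \<in> V" "w \<in> W" using sub2 by auto
      then show "(int p) ^ nat (f p) dvd numer v \<and> (int p) ^ nat (g p) dvd numer w \<and>
        (int p) ^ nat (- f p) dvd denom v \<and> (int p) ^ nat (- g p) dvd denom w \<and>
        ((v, w) \<in> E2 \<longrightarrow>
           multiplicity (int p) (gcd (numer v) (numer w)) = min (nat (f p)) (nat (g p)) \<and>
           multiplicity (int p) (gcd (denom v) (denom w)) = min (nat (- f p)) (nat (- g p)))"
        using gg E2E unfolding gcd_graph_def by blast
    qed
    ultimately show ?thesis using wb2 unfolding gcd_graph_def by blast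
  qed
  have gs: "gcd_subgraph \<mu> V2 W2 E2 P f g V W E P f g"
    unfolding gcd_subgraph_def using gg2 sub2 E2E by auto
  have RR: "R_set P E2 \<subseteq> R" unfolding R_set_def using E2E by blast
  have st: "structured P E2"
    unfolding structured_def
  proof
    fix p assume "p \<in> R_set P E2"
    then have p: "p \<in> R" using RR by auto
    show "\<exists>k::int. \<forall>(v, w)\<in>E2. (ep p v - k, ep p w - k) \<in> {(-1, 0), (0, -1), (0, 0), (0, 1), (1, 0)}"
    proof (intro exI ballI)
      fix e assume e: "e \<in> E2"
      then have "e \<in> E" "e \<notin> Bd p" using sub2 EgE p unfolding Eg_def by auto
      then have "(ep p (fst e) - kk p, ep p (snd e) - kk p) \<in> {(-1, 0), (0, -1), (0, 0), (0, 1), (1, 0)}"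
        unfolding Bd_def by blast
      then show "case e of (v, w) \<Rightarrow> (ep p v - kk p, ep p w - kk p) \<in> {(-1, 0), (0, -1), (0, 0), (0, 1), (1, 0)}"
        by (simp add: case_prod_beta)
    qed
  qed
  have mx2: "maximal th \<mu> V2 W2 E2"
    unfolding maximal_def
  proof (intro allI impI)
    fix V3 W3 E3 assume h: "V3 \<subseteq> V2" "W3 \<subseteq> W2" "E3 \<subseteq> E2 \<inter> (V3 \<times> W3)"
    then have "(V3, W3, E3) \<in> S" unfolding S_def using sub2 by auto
    then have "F (V3, W3, E3) \<le> F x0" using best by blast
    then show "mu_theta th \<mu> V3 W3 E3 \<le> mu_theta th \<mu> V2 W2 E2" unfolding F_def x0e by simp
  qed
  have bnd: "\<forall>i\<in>{1..n}. \<forall>(v, w)\<in>E2.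
        (\<Sum>p\<in>{p. prime_in p (v / w) \<and> p \<in> R_set P E}. a p i)
          \<le> C8 \<tau> M * real n * (\<Sum>p\<in>R_set P E. a p i / real p)"
  proof (intro ballI)
    fix i e assume i: "i \<in> {1..n}" and e: "e \<in> E2"
    then have "e \<in> E" "e \<notin> Viol i" using sub2 EgE unfolding Eg_def by auto
    then have "Xf i e \<le> C8 \<tau> M * real n * T i" unfolding Viol_def by blast
    then show "case e of (v, w) \<Rightarrow> (\<Sum>p\<in>{p. prime_in p (v / w) \<and> p \<in> R_set P E}. a p i)
          \<le> C8 \<tau> M * real n * (\<Sum>p\<in>R_set P E. a p i / real p)"
      unfolding Xf_def T_def by (simp add: case_prod_beta)
  qed
  have q: "quality th \<mu> V2 W2 E2 P f g \<ge> quality th \<mu> V W E P f g / 2"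
  proof -
    have "quality th \<mu> V2 W2 E2 P f g = mu_theta th \<mu> V2 W2 E2 * Pi0"
      unfolding quality_def Pi0_def Q0_def ..
    moreover have "quality th \<mu> V W E P f g = mtG * Pi0"
      unfolding quality_def Pi0_def Q0_def mtG_def ..
    moreover have "mu_theta th \<mu> V2 W2 E2 * Pi0 \<ge> mtG / 2 * Pi0"
      using mt2 Pi0_pos by (intro mult_right_mono) auto
    ultimately show ?thesis by simp
  qed
  show ?thesis using gs st E2ne mx2 bnd q by blast
qed

end

theorem proposition7p15:
  fixes \<tau> M :: real and \<mu> :: "rat \<Rightarrow> real" and V W :: "rat set" and E :: "(rat \<times> rat) set"
    and P :: "nat set" and f g :: "nat \<Rightarrow> int" and n :: nat and a :: "nat \<Rightarrow> nat \<Rightarrow> real"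
  assumes "0 < \<tau>" and "\<tau> < 1/100" and "M \<ge> 2"
    and "gcd_graph \<mu> V W E P f g" and "E \<noteq> {}"
    and "maximal (2 + \<tau>) \<mu> V W E"
    and "R_set P E \<subseteq> {p. real p > C6 \<tau> M}"
    and "R_flat \<tau> M \<mu> V W E P f g = {}"
    and "n \<ge> 1"
    and "\<And>p i. prime p \<Longrightarrow> i \<in> {1..n} \<Longrightarrow> a p i \<ge> 0"
  shows "\<exists>V' W' E' P' f' g'.
     gcd_subgraph \<mu> V' W' E' P' f' g' V W E P f g \<and> structured P' E' \<and>
     E' \<noteq> {} \<and> maximal (2 + \<tau>) \<mu> V' W' E' \<and>
     (\<forall>i\<in>{1..n}. \<forall>(v, w)\<in>E'.
        (\<Sum>p\<in>{p. prime_in p (v / w) \<and> p \<in> R_set P E}. a p i)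
          \<le> C8 \<tau> M * real n * (\<Sum>p\<in>R_set P E. a p i / real p)) \<and>
     quality (2 + \<tau>) \<mu> V' W' E' P' f' g' \<ge> quality (2 + \<tau>) \<mu> V W E P f g / 2"
  proof -
  have "hyp \<tau> M \<mu> V W E P f g n a" unfolding hyp_def using assms by blast
  then show ?thesis by (rule hyp.main)
qed

end
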